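(* Let $\mathcal{H}$ be a complex infinite-dimensional Hilbert space, let $n>1$ be an integer, and let $A\in B(\mathcal{H})$ satisfy $A^*A^n=A^nA^*$ (equivalently, $A^n$ is normal). Then $H_0(A-\lambda)=(A-\lambda)^{-1}(0)$ for every non-zero $\lambda\in\sigma(A)$, and $H_0(A)=A^{-n}(0)$. In particular, $A$ is polaroid.
   Context: $B(\mathcal{H})$ denotes the algebra of bounded linear operators on $\mathcal{H}$. For $S\in B(\mathcal{H})$, the quasi-nilpotent part of $S$ is $H_0(S)=\{x\in\mathcal{H}:\lim_{m\to\infty}\|S^mx\|^{1/m}=0\}$; $S^{-k}(0)$ denotes the kernel of $S^k$. A point $\lambda$ isolated in $\sigma(S)$ is a pole of $S$ if $0<\mathrm{asc}(S-\lambda)=\mathrm{dsc}(S-\lambda)<\infty$, where ascent/descent are the least $p\ge0$ with $(S-\lambda)^{-p}(0)=(S-\lambda)^{-(p+1)}(0)$, resp. $(S-\lambda)^p(\mathcal{H})=(S-\lambda)^{p+1}(\mathcal{H})$. $S$ is polaroid if every isolated point of $\sigma(S)$ is a pole of $S$. *)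

theory Defs
  imports "HOL-Analysis.Analysis"
begin

class complex_vector = real_vector +
  fixes scaleC :: "complex \<Rightarrow> 'a \<Rightarrow> 'a"  (infixr \<open>*\<^sub>C\<close> 75)
  assumes scaleC_add_right: "a *\<^sub>C (x + y) = a *\<^sub>C x + a *\<^sub>C y"
    and scaleC_add_left: "(a + b) *\<^sub>C x = a *\<^sub>C x + b *\<^sub>C x"
    and scaleC_scaleC: "a *\<^sub>C (b *\<^sub>C x) = (a * b) *\<^sub>C x"
    and scaleC_one: "1 *\<^sub>C x = x"
    and scaleR_scaleC: "scaleR r x = (complex_of_real r) *\<^sub>C x"

class complex_inner = complex_vector + real_normed_vector +
  fixes cinner :: "'a \<Rightarrow> 'a \<Rightarrow> complex"
  assumes cinner_commute: "cinner x y = cnj (cinner y x)"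
    and cinner_add_left: "cinner (x + y) z = cinner x z + cinner y z"
    and cinner_scaleC_left: "cinner (r *\<^sub>C x) y = cnj r * cinner x y"
    and cinner_self_real: "Im (cinner x x) = 0"
    and cinner_self_nonneg: "0 \<le> Re (cinner x x)"
    and cinner_eq_zero_iff: "cinner x x = 0 \<longleftrightarrow> x = 0"
    and norm_eq_sqrt_cinner: "norm x = sqrt (Re (cinner x x))"

text \<open>A complex Hilbert space is a type of class complex_inner and complete_space.\<close>

definition cspan :: "'a::complex_vector set \<Rightarrow> 'a set" where
  "cspan S = {(\<Sum>s\<in>T. c s *\<^sub>C s) | T c. finite T \<and> T \<subseteq> S}"

definition infinite_dimensional :: "'a::complex_vector itself \<Rightarrow> bool" where
  "infinite_dimensional _ \<longleftrightarrow> \<not> (\<exists>S::'a set. finite S \<and> cspan S = UNIV)"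

definition bounded_clinear :: "('a::{complex_vector,real_normed_vector} \<Rightarrow> 'b::{complex_vector,real_normed_vector}) \<Rightarrow> bool" where
  "bounded_clinear f \<longleftrightarrow> bounded_linear f \<and> (\<forall>c x. f (c *\<^sub>C x) = c *\<^sub>C f x)"

definition shift_op :: "('a::complex_vector \<Rightarrow> 'a) \<Rightarrow> complex \<Rightarrow> 'a \<Rightarrow> 'a" where
  "shift_op S l = (\<lambda>x. S x - l *\<^sub>C x)"

definition op_spectrum :: "('a::{complex_vector,real_normed_vector} \<Rightarrow> 'a) \<Rightarrow> complex set" where
  "op_spectrum S = {l. \<not> (\<exists>B. bounded_clinear B \<and> B \<circ> shift_op S l = id \<and> shift_op S l \<circ> B = id)}"

definition op_kernel :: "('a::zero \<Rightarrow> 'b::zero) \<Rightarrow> 'a set" where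
  "op_kernel T = {x. T x = 0}"

definition quasinilpotent_part :: "('a::real_normed_vector \<Rightarrow> 'a) \<Rightarrow> 'a set" where
  "quasinilpotent_part S = {x. (\<lambda>m. norm ((S ^^ m) x) powr (1 / real m)) \<longlonglongrightarrow> 0}"

definition is_ascent :: "('a::zero \<Rightarrow> 'a) \<Rightarrow> nat \<Rightarrow> bool" where
  "is_ascent T p \<longleftrightarrow> op_kernel (T ^^ p) = op_kernel (T ^^ Suc p) \<and>
      (\<forall>q<p. op_kernel (T ^^ q) \<noteq> op_kernel (T ^^ Suc q))"

definition is_descent :: "('a \<Rightarrow> 'a) \<Rightarrow> nat \<Rightarrow> bool" where
  "is_descent T p \<longleftrightarrow> range (T ^^ p) = range (T ^^ Suc p) \<and>
      (\<forall>q<p. range (T ^^ q) \<noteq> range (T ^^ Suc q))"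

definition is_pole :: "('a::{complex_vector,real_normed_vector} \<Rightarrow> 'a) \<Rightarrow> complex \<Rightarrow> bool" where
  "is_pole S l \<longleftrightarrow> l \<in> op_spectrum S \<and> \<not> l islimpt op_spectrum S \<and>
     (\<exists>p>0. is_ascent (shift_op S l) p \<and> is_descent (shift_op S l) p)"

definition polaroid :: "('a::{complex_vector,real_normed_vector} \<Rightarrow> 'a) \<Rightarrow> bool" where
  "polaroid S \<longleftrightarrow> (\<forall>l. l \<in> op_spectrum S \<and> \<not> l islimpt op_spectrum S \<longrightarrow> is_pole S l)"

end

theory Submission
  imports Defs "HOL-Complex_Analysis.Complex_Analysis"
begin

lemma scaleC_zero_left [simp]: "(0::complex) *\<^sub>C x = (0::'a::complex_vector)"
  using scaleR_scaleC[of 0 x] by simp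

lemma scaleC_zero_right [simp]: "c *\<^sub>C (0::'a::complex_vector) = 0"
proof -
  have "c *\<^sub>C (0::'a) = c *\<^sub>C 0 + c *\<^sub>C 0" by (metis add.right_neutral scaleC_add_right)
  then show ?thesis by simp
qed

lemma scaleC_minus_left: "(- c) *\<^sub>C x = - (c *\<^sub>C (x::'a::complex_vector))"
proof -
  have "(c + - c) *\<^sub>C x = 0" by simp
  then have "c *\<^sub>C x + (- c) *\<^sub>C x = 0" by (simp only: scaleC_add_left)
  then show ?thesis by (simp add: eq_neg_iff_add_eq_0 add.commute)
qed

lemma scaleC_minus_right: "c *\<^sub>C (- x) = - (c *\<^sub>C (x::'a::complex_vector))"
proof -
  have "c *\<^sub>C (x + - x) = 0" by simp
  then have "c *\<^sub>C x + c *\<^sub>C (- x) = 0" by (simp only: scaleC_add_right)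
  then show ?thesis by (simp add: eq_neg_iff_add_eq_0 add.commute)
qed

lemma scaleC_diff_right: "c *\<^sub>C (x - y) = c *\<^sub>C x - c *\<^sub>C (y::'a::complex_vector)"
  by (simp only: diff_conv_add_uminus scaleC_add_right scaleC_minus_right)

lemma scaleC_diff_left: "(a - b) *\<^sub>C x = a *\<^sub>C x - b *\<^sub>C (x::'a::complex_vector)"
  by (simp only: diff_conv_add_uminus scaleC_add_left scaleC_minus_left)

lemma scaleC_of_real: "complex_of_real r *\<^sub>C x = r *\<^sub>R (x::'a::complex_vector)"
  by (simp add: scaleR_scaleC)

lemma scaleC_one' [simp]: "1 *\<^sub>C x = (x::'a::complex_vector)"
  by (rule scaleC_one)

lemma scaleC_sum_right: "c *\<^sub>C (\<Sum>i\<in>S. f i) = (\<Sum>i\<in>S. c *\<^sub>C (f i::'a::complex_vector))"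
  by (induction S rule: infinite_finite_induct) (auto simp: scaleC_add_right)

lemma scaleC_scaleC' [simp]: "a *\<^sub>C (b *\<^sub>C x) = (a * b) *\<^sub>C (x::'a::complex_vector)"
  by (rule scaleC_scaleC)

lemma cinner_add_right: "cinner x (y + z) = cinner x y + cinner x (z::'a::complex_inner)"
  by (metis cinner_add_left cinner_commute complex_cnj_add)

lemma cinner_scaleC_right: "cinner x (c *\<^sub>C y) = c * cinner x (y::'a::complex_inner)"
  by (metis cinner_commute cinner_scaleC_left complex_cnj_cnj complex_cnj_mult)

lemma cinner_zero_left [simp]: "cinner 0 (y::'a::complex_inner) = 0"
  using cinner_add_left[of "0::'a" 0 y] by simp

lemma cinner_zero_right [simp]: "cinner (x::'a::complex_inner) 0 = 0"
  using cinner_add_right[of x 0 0] by simp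

lemma cinner_minus_left: "cinner (- x) (y::'a::complex_inner) = - cinner x y"
  using cinner_scaleC_left[of "-1" x y] by (simp add: scaleC_minus_left)

lemma cinner_minus_right: "cinner x (- y::'a::complex_inner) = - cinner x y"
  using cinner_scaleC_right[of x "-1" y] by (simp add: scaleC_minus_left)

lemma cinner_diff_left: "cinner (x - y) (z::'a::complex_inner) = cinner x z - cinner y z"
  by (simp only: diff_conv_add_uminus cinner_add_left cinner_minus_left)

lemma cinner_diff_right: "cinner x (y - z::'a::complex_inner) = cinner x y - cinner x z"
  by (simp only: diff_conv_add_uminus cinner_add_right cinner_minus_right)

lemmas cinner_simps = cinner_add_left cinner_add_right cinner_diff_left cinner_diff_right
  cinner_scaleC_left cinner_scaleC_right cinner_minus_left cinner_minus_right

lemma cinner_self_norm: "cinner x x = complex_of_real ((norm (x::'a::complex_inner))\<^sup>2)"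
proof -
  have "Re (cinner x x) = (norm x)\<^sup>2"
    using norm_eq_sqrt_cinner[of x] cinner_self_nonneg[of x] by simp
  then show ?thesis using cinner_self_real[of x] by (simp add: complex_eq_iff)
qed

lemma norm_scaleC: "norm (c *\<^sub>C x) = cmod c * norm (x::'a::complex_inner)"
proof -
  have "cinner (c *\<^sub>C x) (c *\<^sub>C x) = (cnj c * c) * cinner x x"
    by (simp add: cinner_simps mult.assoc)
  also have "cnj c * c = complex_of_real ((cmod c)\<^sup>2)"
    by (metis complex_norm_square mult.commute of_real_power)
  finally have "complex_of_real ((norm (c *\<^sub>C x))\<^sup>2) = complex_of_real ((cmod c)\<^sup>2 * (norm x)\<^sup>2)"
    by (simp only: cinner_self_norm of_real_mult)
  then have "(norm (c *\<^sub>C x))\<^sup>2 = ((cmod c) * norm x)\<^sup>2"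
    by (simp only: of_real_eq_iff power_mult_distrib)
  then show ?thesis by (simp add: power2_eq_iff_nonneg)
qed

lemma cinner_ext_right: assumes "\<And>y. cinner y a = cinner y (b::'a::complex_inner)" shows "a = b"
proof -
  have "cinner (a - b) (a - b) = 0" by (simp add: cinner_diff_right assms)
  then show ?thesis by (simp add: cinner_eq_zero_iff)
qed

lemma cinner_ext_left: assumes "\<And>y. cinner a y = cinner (b::'a::complex_inner) y" shows "a = b"
proof -
  have "cinner (a - b) (a - b) = 0" by (simp add: cinner_diff_left assms)
  then show ?thesis by (simp add: cinner_eq_zero_iff)
qed

lemma cauchy_schwarz: "cmod (cinner x y) \<le> norm x * norm (y::'a::complex_inner)"
proof (cases "y = 0")
  case True then show ?thesis by simp
next
  case False
  define N where "N = (norm y)\<^sup>2"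
  have N: "N > 0" using False by (simp add: N_def)
  define a where "a = cinner y x"
  define t where "t = a / complex_of_real N"
  have cxy: "cinner x y = cnj a" by (simp add: a_def cinner_commute[of x y])
  have "cinner (x - t *\<^sub>C y) (x - t *\<^sub>C y)
     = cinner x x - t * cnj a - cnj t * a + cnj t * t * complex_of_real N"
    by (simp add: cinner_simps cxy a_def[symmetric] cinner_self_norm[of y] N_def algebra_simps)
  also have "\<dots> = complex_of_real ((norm x)\<^sup>2 - (cmod a)\<^sup>2 / N)"
    using N by (simp add: t_def cinner_self_norm field_simps) (metis complex_norm_square of_real_power)
  finally have "0 \<le> (norm x)\<^sup>2 - (cmod a)\<^sup>2 / N"
    using cinner_self_nonneg[of "x - t *\<^sub>C y"] by simp
  then have "(cmod a)\<^sup>2 \<le> (norm x)\<^sup>2 * N" using N by (simp add: field_simps)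
  then have "(cmod a)\<^sup>2 \<le> (norm x * norm y)\<^sup>2" by (simp add: N_def power_mult_distrib)
  then have "cmod a \<le> norm x * norm y" by (rule power2_le_imp_le) simp
  then show ?thesis by (simp add: cxy)
qed

lemma bounded_linear_scaleC: "bounded_linear (\<lambda>v::'a::complex_inner. c *\<^sub>C v)"
proof (rule bounded_linear_intro[where K="cmod c"])
  show "c *\<^sub>C (x + y) = c *\<^sub>C x + c *\<^sub>C y" for x y :: 'a by (rule scaleC_add_right)
  show "c *\<^sub>C (r *\<^sub>R x) = r *\<^sub>R (c *\<^sub>C x)" for r and x :: 'a
    by (simp add: scaleR_scaleC mult.commute)
  show "norm (c *\<^sub>C x) \<le> norm x * cmod c" for x :: 'a by (simp add: norm_scaleC mult.commute)
qed

context
  fixes f :: "'a::complex_inner \<Rightarrow> 'b::complex_inner"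
  assumes f: "bounded_clinear f"
begin
lemma bcl_bl: "bounded_linear f" using f by (simp add: bounded_clinear_def)
lemma bcl_add: "f (x + y) = f x + f y" using bcl_bl by (simp add: linear_add bounded_linear.linear)
lemma bcl_diff: "f (x - y) = f x - f y" using bcl_bl by (simp add: linear_diff bounded_linear.linear)
lemma bcl_minus: "f (- x) = - f x" using bcl_bl by (simp add: linear_neg bounded_linear.linear)
lemma bcl_zero: "f 0 = 0" using bcl_bl by (simp add: linear_0 bounded_linear.linear)
lemma bcl_scaleC: "f (c *\<^sub>C x) = c *\<^sub>C f x" using f by (simp add: bounded_clinear_def)
lemma bcl_sum: "f (\<Sum>i\<in>S. g i) = (\<Sum>i\<in>S. f (g i))"
  by (induction S rule: infinite_finite_induct) (auto simp: bcl_add bcl_zero)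
lemma bcl_bound: "\<exists>K>0. \<forall>x. norm (f x) \<le> K * norm x"
  using bounded_linear.pos_bounded[OF bcl_bl] by (auto simp: mult.commute)
lemma bcl_cont: "continuous_on S f"
  using bcl_bl by (simp add: linear_continuous_on)
end

lemma bcl_id: "bounded_clinear (\<lambda>x::'a::complex_inner. x)"
  by (simp add: bounded_clinear_def)

lemma bcl_id': "bounded_clinear (id::'a::complex_inner \<Rightarrow> 'a)"
  by (simp add: bounded_clinear_def id_def)

lemma bcl_compose:
  assumes "bounded_clinear (f::'b::complex_inner \<Rightarrow> 'c::complex_inner)" "bounded_clinear (g::'a::complex_inner \<Rightarrow> 'b)"
  shows "bounded_clinear (\<lambda>x. f (g x))"
  using assms unfolding bounded_clinear_def
  by (auto intro: bounded_linear_compose)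

lemma bcl_o:
  assumes "bounded_clinear (f::'b::complex_inner \<Rightarrow> 'c::complex_inner)" "bounded_clinear (g::'a::complex_inner \<Rightarrow> 'b)"
  shows "bounded_clinear (f \<circ> g)"
  using bcl_compose[OF assms] by (simp add: comp_def)

lemma bcl_add_op:
  assumes "bounded_clinear (f::'a::complex_inner \<Rightarrow> 'b::complex_inner)" "bounded_clinear g"
  shows "bounded_clinear (\<lambda>x. f x + g x)"
  using assms unfolding bounded_clinear_def
  by (auto intro: bounded_linear_add simp: scaleC_add_right)

lemma bcl_diff_op:
  assumes "bounded_clinear (f::'a::complex_inner \<Rightarrow> 'b::complex_inner)" "bounded_clinear g"
  shows "bounded_clinear (\<lambda>x. f x - g x)"
  using assms unfolding bounded_clinear_def
  by (auto intro: bounded_linear_sub simp: scaleC_diff_right)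

lemma bcl_scale_op:
  assumes "bounded_clinear (f::'a::complex_inner \<Rightarrow> 'b::complex_inner)"
  shows "bounded_clinear (\<lambda>x. c *\<^sub>C f x)"
proof -
  have "bounded_linear (\<lambda>x. c *\<^sub>C f x)"
    using bounded_linear_compose[OF bounded_linear_scaleC bcl_bl[OF assms]] by simp
  then show ?thesis using assms unfolding bounded_clinear_def by (simp add: mult.commute)
qed

lemma bcl_scaleC_id: "bounded_clinear (\<lambda>x::'a::complex_inner. c *\<^sub>C x)"
  unfolding bounded_clinear_def using bounded_linear_scaleC by (simp add: mult.commute)

lemma bcl_zero_op: "bounded_clinear (\<lambda>x::'a::complex_inner. 0::'b::complex_inner)"
  by (simp add: bounded_clinear_def)

lemma bcl_sum_op:
  assumes "\<And>i. i \<in> S \<Longrightarrow> bounded_clinear (f i::'a::complex_inner \<Rightarrow> 'b::complex_inner)"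
  shows "bounded_clinear (\<lambda>x. \<Sum>i\<in>S. f i x)"
  using assms
proof (induction S rule: infinite_finite_induct)
  case (insert i F)
  then show ?case by (simp add: bcl_add_op)
qed (auto simp: bcl_zero_op)

lemma bcl_funpow:
  assumes "bounded_clinear (f::'a::complex_inner \<Rightarrow> 'a)"
  shows "bounded_clinear (f ^^ n)"
proof (induction n)
  case 0 then show ?case by (simp add: bcl_id' bcl_id)
next
  case (Suc n) then show ?case using bcl_o[OF assms Suc] by (simp add: comp_def)
qed

lemma bcl_shift:
  assumes "bounded_clinear (A::'a::complex_inner \<Rightarrow> 'a)"
  shows "bounded_clinear (shift_op A l)"
  unfolding shift_op_def by (rule bcl_diff_op[OF assms bcl_scaleC_id])

lemma shift_op_apply: "shift_op A l x = A x - l *\<^sub>C x"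
  by (simp add: shift_op_def)

lemma funpow_comm:
  assumes "\<And>x. f (g x) = g (f x)"
  shows "(f ^^ m) (g x) = g ((f ^^ m) x)"
  by (induction m) (simp_all add: assms)

lemma funpow_comm2:
  assumes "\<And>x. f (g x) = g (f x)"
  shows "(f ^^ m) ((g ^^ k) x) = (g ^^ k) ((f ^^ m) x)"
  by (rule funpow_comm) (metis assms funpow_comm)

lemma funpow_zero:
  assumes "bounded_clinear (f::'a::complex_inner \<Rightarrow> 'a)"
  shows "(f ^^ m) 0 = 0"
  by (induction m) (simp_all add: bcl_zero[OF assms])

lemma adjoint_bcl:
  fixes A B :: "'a::complex_inner \<Rightarrow> 'a"
  assumes A: "bounded_clinear A" and adj: "\<And>x y. cinner (A x) y = cinner x (B y)"
  shows "bounded_clinear B"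
proof -
  have add: "B (y + z) = B y + B z" for y z
    by (rule cinner_ext_right) (simp add: adj[symmetric] cinner_simps)
  have sc: "B (c *\<^sub>C y) = c *\<^sub>C B y" for c y
    by (rule cinner_ext_right) (simp add: adj[symmetric] cinner_simps)
  obtain K where K: "K > 0" "\<And>x. norm (A x) \<le> K * norm x" using bcl_bound[OF A] by blast
  have bd: "norm (B y) \<le> norm y * K" for y
  proof -
    have "(norm (B y))\<^sup>2 = Re (cinner (B y) (B y))" by (simp add: cinner_self_norm)
    also have "cinner (B y) (B y) = cinner (A (B y)) y" by (simp add: adj)
    also have "Re \<dots> \<le> cmod \<dots>" by (rule complex_Re_le_cmod)
    also have "\<dots> \<le> norm (A (B y)) * norm y" by (rule cauchy_schwarz)
    also have "\<dots> \<le> K * norm (B y) * norm y" using K by (simp add: mult_right_mono)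
    finally have "norm (B y) * norm (B y) \<le> norm (B y) * (K * norm y)"
      by (simp add: power2_eq_square mult_ac)
    then show ?thesis
      by (cases "norm (B y) = 0") (use K(1) in \<open>auto simp: mult.commute\<close>)
  qed
  have "bounded_linear B"
  proof (rule bounded_linear_intro[where K=K])
    show "B (x + y) = B x + B y" for x y by (rule add)
    show "B (r *\<^sub>R x) = r *\<^sub>R B x" for r x by (simp add: scaleR_scaleC sc)
    show "norm (B x) \<le> norm x * K" for x by (rule bd)
  qed
  then show ?thesis using sc by (simp add: bounded_clinear_def)
qed

lemma adjoint_funpow:
  fixes A B :: "'a::complex_inner \<Rightarrow> 'a"
  assumes adj: "\<And>x y. cinner (A x) y = cinner x (B y)"
  shows "cinner ((A ^^ k) x) y = cinner x ((B ^^ k) y)"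
proof (induction k arbitrary: y)
  case 0 then show ?case by simp
next
  case (Suc k)
  have "cinner ((A ^^ Suc k) x) y = cinner ((A ^^ k) x) (B y)"
    by (simp add: adj)
  also have "\<dots> = cinner x ((B ^^ k) (B y))" by (rule Suc)
  finally show ?case by (simp add: funpow_swap1)
qed

lemma adjoint_shift:
  fixes A B :: "'a::complex_inner \<Rightarrow> 'a"
  assumes adj: "\<And>x y. cinner (A x) y = cinner x (B y)"
  shows "cinner (shift_op A l x) y = cinner x (shift_op B (cnj l) y)"
  by (simp add: shift_op_def cinner_simps adj)

section \<open>Quasi-nilpotent part lemmas\<close>

lemma pow_powr_inv:
  fixes K :: real
  assumes "K > 0" "m > 0"
  shows "(K ^ m) powr (1 / real m) = K"
proof -
  have "(K ^ m) powr (1 / real m) = (K powr real m) powr (1 / real m)"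
    using assms by (simp add: powr_realpow)
  also have "\<dots> = K powr 1" using assms by (simp add: powr_powr)
  also have "\<dots> = K" using assms by (simp add: powr_one)
  finally show ?thesis .
qed

lemma H0_mono:
  assumes K: "K > 0"
    and ev: "eventually (\<lambda>m. norm ((S ^^ m) x) \<le> K ^ m * norm ((T ^^ m) y)) sequentially"
    and y: "y \<in> quasinilpotent_part T"
  shows "x \<in> quasinilpotent_part S"
proof -
  have lim: "(\<lambda>m. norm ((T ^^ m) y) powr (1 / real m)) \<longlonglongrightarrow> 0"
    using y by (simp add: quasinilpotent_part_def)
  have lim2: "(\<lambda>m. K * norm ((T ^^ m) y) powr (1 / real m)) \<longlonglongrightarrow> 0"
    using tendsto_mult[OF tendsto_const lim, of K] by simp
  have ev2: "eventually (\<lambda>m. norm ((S ^^ m) x) powr (1 / real m) \<le> K * norm ((T ^^ m) y) powr (1 / real m)) sequentially"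
    using ev eventually_gt_at_top[of 0]
  proof eventually_elim
    case (elim m)
    have "norm ((S ^^ m) x) powr (1 / real m) \<le> (K ^ m * norm ((T ^^ m) y)) powr (1 / real m)"
      using elim by (intro powr_mono2) auto
    also have "\<dots> = (K ^ m) powr (1 / real m) * norm ((T ^^ m) y) powr (1 / real m)"
      by (rule powr_mult)
    also have "\<dots> = K * norm ((T ^^ m) y) powr (1 / real m)"
      using K elim by (simp add: pow_powr_inv)
    finally show ?case .
  qed
  have "(\<lambda>m. norm ((S ^^ m) x) powr (1 / real m)) \<longlonglongrightarrow> 0"
    by (rule tendsto_sandwich[OF _ ev2 tendsto_const lim2]) simp
  then show ?thesis by (simp add: quasinilpotent_part_def)
qed

lemma H0_zero:
  assumes K: "K > 0"
    and bd: "\<And>m. norm w \<le> K ^ m * norm ((T ^^ m) w)"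
    and w: "w \<in> quasinilpotent_part T"
  shows "w = 0"
proof (rule ccontr)
  assume "w \<noteq> 0"
  then have c: "norm w > 0" by simp
  have lim: "(\<lambda>m. norm ((T ^^ m) w) powr (1 / real m)) \<longlonglongrightarrow> 0"
    using w by (simp add: quasinilpotent_part_def)
  have "(\<lambda>m. norm w powr (1 / real m) / K) \<longlonglongrightarrow> norm w powr 0 / K"
    by (intro tendsto_divide tendsto_powr tendsto_const lim_1_over_n) (use c K in auto)
  then have lim2: "(\<lambda>m. norm w powr (1 / real m) / K) \<longlonglongrightarrow> 1 / K"
    using c by simp
  have ev: "eventually (\<lambda>m. norm w powr (1 / real m) / K \<le> norm ((T ^^ m) w) powr (1 / real m)) sequentially"
    using eventually_gt_at_top[of 0]
  proof eventually_elim
    case (elim m)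
    have "norm w / K ^ m \<le> norm ((T ^^ m) w)"
      using bd[of m] K by (simp add: divide_le_eq mult.commute)
    then have "(norm w / K ^ m) powr (1 / real m) \<le> norm ((T ^^ m) w) powr (1 / real m)"
      by (intro powr_mono2) (use K in auto)
    moreover have "(norm w / K ^ m) powr (1 / real m) = norm w powr (1 / real m) / K"
      using K elim by (simp add: powr_divide pow_powr_inv)
    ultimately show ?case by simp
  qed
  have "1 / K \<le> 0" by (rule tendsto_le[OF trivial_limit_sequentially lim lim2 ev])
  then show False using K by simp
qed

lemma ker_H0:
  assumes S: "bounded_clinear (S::'a::complex_inner \<Rightarrow> 'a)" and x: "(S ^^ k) x = 0"
  shows "x \<in> quasinilpotent_part S"
proof -
  have "eventually (\<lambda>m. norm ((S ^^ m) x) powr (1 / real m) = 0) sequentially"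
    using eventually_ge_at_top[of k]
  proof eventually_elim
    case (elim m)
    have "(S ^^ m) x = (S ^^ (m - k)) ((S ^^ k) x)"
      using elim by (metis funpow_add comp_apply le_add_diff_inverse2)
    then show ?case by (simp add: x funpow_zero[OF S])
  qed
  then show ?thesis unfolding quasinilpotent_part_def by (simp add: tendsto_eventually)
qed

lemma bcl_funpow_bound:
  assumes "bounded_clinear (B::'a::complex_inner \<Rightarrow> 'a)"
  obtains K where "K > 0" "\<And>m v. norm ((B ^^ m) v) \<le> K ^ m * norm v"
proof -
  obtain K where K: "K > 0" "\<And>v. norm (B v) \<le> K * norm v" using bcl_bound[OF assms] by blast
  have "norm ((B ^^ m) v) \<le> K ^ m * norm v" for m v
  proof (induction m)
    case 0 then show ?case by simp
  next
    case (Suc m)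
    have "norm ((B ^^ Suc m) v) \<le> K * norm ((B ^^ m) v)" using K(2) by simp
    also have "\<dots> \<le> K * (K ^ m * norm v)" using Suc K(1) by (simp add: mult_left_mono)
    finally show ?case by (simp add: mult.assoc)
  qed
  then show ?thesis using that K(1) by blast
qed

lemma H0_apply:
  assumes T: "bounded_clinear (T::'a::complex_inner \<Rightarrow> 'a)" and x: "x \<in> quasinilpotent_part T"
  shows "T x \<in> quasinilpotent_part T"
proof -
  obtain K where K: "K > 0" "\<And>v. norm (T v) \<le> K * norm v" using bcl_bound[OF T] by blast
  define K' where "K' = max K 1"
  have K': "K' > 0" "K \<le> K'" "1 \<le> K'" by (auto simp: K'_def)
  show ?thesis
  proof (rule H0_mono[OF K'(1) _ x])
    show "eventually (\<lambda>m. norm ((T ^^ m) (T x)) \<le> K' ^ m * norm ((T ^^ m) x)) sequentially"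
      using eventually_gt_at_top[of 0]
    proof eventually_elim
      case (elim m)
      have "(T ^^ m) (T x) = T ((T ^^ m) x)" by (simp add: funpow_swap1)
      then have "norm ((T ^^ m) (T x)) \<le> K * norm ((T ^^ m) x)" using K(2) by simp
      also have "\<dots> \<le> K' * norm ((T ^^ m) x)" using K' by (simp add: mult_right_mono)
      also have "K' \<le> K' ^ m" using K' elim by (simp add: power_increasing[of 1 m K', simplified])
      then have "K' * norm ((T ^^ m) x) \<le> K' ^ m * norm ((T ^^ m) x)" by (simp add: mult_right_mono)
      finally show ?case .
    qed
  qed
qed

section \<open>Normal operators\<close>

lemma normal_H0:
  fixes T Ts :: "'a::complex_inner \<Rightarrow> 'a"
  assumes T: "bounded_clinear T" and adj: "\<And>x y. cinner (T x) y = cinner x (Ts y)"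
    and nor: "\<And>x. Ts (T x) = T (Ts x)" and x: "x \<in> quasinilpotent_part T"
  shows "T x = 0"
proof -
  have lc: "(norm (T u))\<^sup>2 \<le> norm u * norm (T (T u))" for u
  proof -
    have nTs: "norm (Ts v) = norm (T v)" for v
    proof -
      have "(norm (Ts v))\<^sup>2 = Re (cinner (Ts v) (Ts v))" by (simp add: cinner_self_norm)
      also have "cinner (Ts v) (Ts v) = cinner (T (Ts v)) v" by (simp add: adj)
      also have "\<dots> = cnj (cinner v (Ts (T v)))" by (simp add: nor cinner_commute[of v])
      also have "cinner v (Ts (T v)) = cinner (T v) (T v)" by (simp add: adj)
      finally have "(norm (Ts v))\<^sup>2 = (norm (T v))\<^sup>2" by (simp add: cinner_self_norm)
      then show ?thesis by (simp add: power2_eq_iff_nonneg)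
    qed
    have "(norm (T u))\<^sup>2 = Re (cinner u (Ts (T u)))" by (simp add: adj[symmetric] cinner_self_norm)
    also have "\<dots> \<le> cmod (cinner u (Ts (T u)))" by (rule complex_Re_le_cmod)
    also have "\<dots> \<le> norm u * norm (Ts (T u))" by (rule cauchy_schwarz)
    also have "\<dots> = norm u * norm (T (T u))" by (simp add: nTs)
    finally show ?thesis .
  qed
  define a where "a k = norm ((T ^^ k) x)" for k
  have a2: "(a (Suc k))\<^sup>2 \<le> a k * a (Suc (Suc k))" for k
    using lc[of "(T ^^ k) x"] by (simp add: a_def)
  have a_nn: "a k \<ge> 0" for k by (simp add: a_def)
  show ?thesis
  proof (rule ccontr)
    assume Tx: "T x \<noteq> 0"
    then have x0: "x \<noteq> 0" using bcl_zero[OF T] by auto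
    have a0: "a 0 > 0" using x0 by (simp add: a_def)
    have a1: "a 1 > 0" using Tx by (simp add: a_def)
    define \<rho> where "\<rho> = a 1 / a 0"
    have \<rho>: "\<rho> > 0" using a0 a1 by (simp add: \<rho>_def)
    have step: "\<rho> * a k \<le> a (Suc k)" for k
    proof (induction k)
      case 0 then show ?case using a0 by (simp add: \<rho>_def)
    next
      case (Suc k)
      show ?case
      proof (cases "a (Suc k) = 0")
        case True then show ?thesis using a_nn by simp
      next
        case False
        then have pos: "a (Suc k) > 0" using a_nn[of "Suc k"] by simp
        have "0 < (a (Suc k))\<^sup>2" using pos by simp
        also have "\<dots> \<le> a k * a (Suc (Suc k))" by (rule a2)
        finally have ak: "a k > 0" using a_nn[of k] a_nn[of "Suc (Suc k)"]
          by (metis mult_eq_0_iff mult_nonneg_nonneg not_le order_le_less zero_less_mult_pos2)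
        have "\<rho> \<le> a (Suc k) / a k" using Suc ak by (simp add: pos_le_divide_eq)
        then have "\<rho> * a (Suc k) \<le> (a (Suc k) / a k) * a (Suc k)" using mult_right_mono[OF _ less_imp_le[OF pos]] by blast
        also have "\<dots> = (a (Suc k))\<^sup>2 / a k" by (simp add: power2_eq_square)
        also have "\<dots> \<le> a (Suc (Suc k))" using a2[of k] ak by (simp add: divide_le_eq mult.commute)
        finally show ?thesis .
      qed
    qed
    have pw: "\<rho> ^ m * a 0 \<le> a m" for m
    proof (induction m)
      case 0 then show ?case by simp
    next
      case (Suc m)
      have "\<rho> ^ Suc m * a 0 = \<rho> * (\<rho> ^ m * a 0)" by simp
      also have "\<dots> \<le> \<rho> * a m" using Suc \<rho> by (simp add: mult_left_mono)
      also have "\<dots> \<le> a (Suc m)" by (rule step)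
      finally show ?case .
    qed
    have "x = 0"
    proof (rule H0_zero[OF _ _ x])
      show "0 < 1 / \<rho>" using \<rho> by simp
      show "norm x \<le> (1 / \<rho>) ^ m * norm ((T ^^ m) x)" for m
        using pw[of m] \<rho> by (simp add: a_def power_one_over field_simps)
    qed
    then show False using x0 by simp
  qed
qed

fun Bk :: "('a::complex_vector \<Rightarrow> 'a) \<Rightarrow> complex \<Rightarrow> nat \<Rightarrow> 'a \<Rightarrow> 'a" where
  "Bk A l 0 u = 0"
| "Bk A l (Suc k) u = l ^ k *\<^sub>C u + A (Bk A l k u)"

fun Ck :: "('a::complex_vector \<Rightarrow> 'a) \<Rightarrow> complex \<Rightarrow> nat \<Rightarrow> 'a \<Rightarrow> 'a" where
  "Ck A l 0 u = 0"
| "Ck A l (Suc k) u = (of_nat k * l ^ (k - 1)) *\<^sub>C u + A (Ck A l k u)"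

context
  fixes A :: "'a::complex_inner \<Rightarrow> 'a"
  assumes A: "bounded_clinear A"
begin

lemma bcl_Bk: "bounded_clinear (\<lambda>u. Bk A l k u)"
proof (induction k)
  case 0 then show ?case by (simp add: bcl_zero_op)
next
  case (Suc k) then show ?case by (simp add: bcl_add_op bcl_scaleC_id bcl_compose[OF A])
qed

lemma bcl_Ck: "bounded_clinear (\<lambda>u. Ck A l k u)"
proof (induction k)
  case 0 then show ?case by (simp add: bcl_zero_op)
next
  case (Suc k) then show ?case by (simp add: bcl_add_op bcl_scaleC_id bcl_compose[OF A])
qed

lemma comm_Bk:
  assumes C: "bounded_clinear C" and CA: "\<And>u. C (A u) = A (C u)"
  shows "C (Bk A l k u) = Bk A l k (C u)"
  by (induction k) (simp_all add: bcl_add[OF C] bcl_scaleC[OF C] bcl_zero[OF C] CA)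

lemma comm_Ck:
  assumes C: "bounded_clinear C" and CA: "\<And>u. C (A u) = A (C u)"
  shows "C (Ck A l k u) = Ck A l k (C u)"
  by (induction k) (simp_all add: bcl_add[OF C] bcl_scaleC[OF C] bcl_zero[OF C] CA)

lemma shift_comm_A: "shift_op A l (A u) = A (shift_op A l u)"
  by (simp add: shift_op_def bcl_diff[OF A] bcl_scaleC[OF A])

lemma T_Bk: "shift_op A l (Bk A l k u) = (A ^^ k) u - l ^ k *\<^sub>C u"
proof (induction k)
  case 0 then show ?case by (simp add: shift_op_def bcl_zero[OF A])
next
  case (Suc k)
  have e: "(A ^^ k) u = A (Bk A l k u) - l *\<^sub>C Bk A l k u + l ^ k *\<^sub>C u"
    using Suc by (simp add: shift_op_def algebra_simps)
  have "(A ^^ Suc k) u = A ((A ^^ k) u)" by simp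
  also have "\<dots> = A (A (Bk A l k u)) - l *\<^sub>C A (Bk A l k u) + l ^ k *\<^sub>C A u"
    by (simp add: e bcl_add[OF A] bcl_diff[OF A] bcl_scaleC[OF A])
  finally show ?case
    by (simp add: shift_op_def bcl_add[OF A] bcl_scaleC[OF A] scaleC_add_right algebra_simps)
qed

lemma shift_aux: "shift_op A l (c *\<^sub>C u + A v) = c *\<^sub>C A u - (l * c) *\<^sub>C u + shift_op A l (A v)"
  by (simp add: shift_op_def bcl_add[OF A] bcl_scaleC[OF A] scaleC_add_right)

lemma B_C: "Bk A l k u = (of_nat k * l ^ (k - 1)) *\<^sub>C u + shift_op A l (Ck A l k u)"
proof (induction k)
  case 0 then show ?case by (simp add: shift_op_def bcl_zero[OF A])
next
  case (Suc k)
  define c' where "c' = of_nat k * l ^ (k - 1)"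
  have kk: "l * c' = of_nat k * l ^ k"
    by (cases k) (simp_all add: c'_def mult_ac)
  have "Bk A l (Suc k) u = l ^ k *\<^sub>C u + A (c' *\<^sub>C u + shift_op A l (Ck A l k u))"
    using Suc by (simp add: c'_def)
  also have "\<dots> = l ^ k *\<^sub>C u + c' *\<^sub>C A u + shift_op A l (A (Ck A l k u))"
    by (simp add: bcl_add[OF A] bcl_scaleC[OF A] shift_comm_A)
  also have "\<dots> = (of_nat (Suc k) * l ^ k) *\<^sub>C u + shift_op A l (c' *\<^sub>C u + A (Ck A l k u))"
  proof -
    have "(of_nat (Suc k) * l ^ k) *\<^sub>C u = l ^ k *\<^sub>C u + (of_nat k * l ^ k) *\<^sub>C u"
      by (simp add: scaleC_add_left[symmetric] distrib_right)
    then show ?thesis by (simp only: shift_aux kk) (simp add: algebra_simps)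
  qed
  finally show ?case by (simp add: c'_def)
qed

end

lemma normal_shift:
  fixes N Ns :: "'a::complex_inner \<Rightarrow> 'a"
  assumes N: "bounded_clinear N" and Ns: "bounded_clinear Ns" and nor: "\<And>u. Ns (N u) = N (Ns u)"
  shows "shift_op Ns (cnj \<mu>) (shift_op N \<mu> u) = shift_op N \<mu> (shift_op Ns (cnj \<mu>) u)"
  by (simp add: shift_op_def bcl_diff[OF N] bcl_scaleC[OF N] bcl_diff[OF Ns] bcl_scaleC[OF Ns] nor
      scaleC_diff_right algebra_simps mult.commute)

context
  fixes A Astar :: "'a::{complex_inner, complete_space} \<Rightarrow> 'a" and n :: nat
  assumes A: "bounded_clinear A"
    and adj: "\<forall>x y. cinner (A x) y = cinner x (Astar y)"
    and n: "n > 1"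
    and comm: "Astar \<circ> (A ^^ n) = (A ^^ n) \<circ> Astar"
begin

lemma adj': "cinner (A x) y = cinner x (Astar y)" using adj by blast

lemma Astar: "bounded_clinear Astar" using adjoint_bcl[OF A adj'] .

lemma N_bcl: "bounded_clinear (A ^^ n)" by (rule bcl_funpow[OF A])
lemma Ns_bcl: "bounded_clinear (Astar ^^ n)" by (rule bcl_funpow[OF Astar])

lemma N_adj: "cinner ((A ^^ n) x) y = cinner x ((Astar ^^ n) y)"
  by (rule adjoint_funpow[OF adj'])

lemma N_normal: "(Astar ^^ n) ((A ^^ n) x) = (A ^^ n) ((Astar ^^ n) x)"
proof -
  have "Astar ((A ^^ n) x) = (A ^^ n) (Astar x)" for x using fun_cong[OF comm, of x] by simp
  then show ?thesis by (rule funpow_comm)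
qed

lemma part2: "quasinilpotent_part A = op_kernel (A ^^ n)"
proof
  show "quasinilpotent_part A \<subseteq> op_kernel (A ^^ n)"
  proof
    fix x assume x: "x \<in> quasinilpotent_part A"
    define f where "f = (\<lambda>m. norm ((A ^^ m) x) powr (1 / real m))"
    have f: "f \<longlonglongrightarrow> 0" using x by (simp add: quasinilpotent_part_def f_def)
    have sm: "strict_mono (\<lambda>m. n * m)" using n by (simp add: strict_mono_def)
    have "(f \<circ> (\<lambda>m. n * m)) \<longlonglongrightarrow> 0" by (rule LIMSEQ_subseq_LIMSEQ[OF f sm])
    then have "(\<lambda>m. (f (n * m)) ^ n) \<longlonglongrightarrow> 0 ^ n" by (intro tendsto_power) (simp add: comp_def)
    moreover have "(0::real) ^ n = 0" using n by simp
    ultimately have l1: "(\<lambda>m. (f (n * m)) ^ n) \<longlonglongrightarrow> 0" by (simp only:)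
    have ev: "eventually (\<lambda>m. (f (n * m)) ^ n = norm (((A ^^ n) ^^ m) x) powr (1 / real m)) sequentially"
      using eventually_gt_at_top[of 0]
    proof eventually_elim
      case (elim m)
      have "(f (n * m)) ^ n = (f (n * m)) powr (real n)"
        using n by (simp add: powr_realpow' f_def)
      also have "\<dots> = norm ((A ^^ (n * m)) x) powr (1 / real m)"
        using n elim by (simp add: f_def powr_powr)
      also have "(A ^^ (n * m)) = (A ^^ n) ^^ m" by (simp add: funpow_mult mult.commute)
      finally show ?case .
    qed
    have "(\<lambda>m. norm (((A ^^ n) ^^ m) x) powr (1 / real m)) \<longlonglongrightarrow> 0"
      using Lim_transform_eventually[OF l1 ev] .
    then have "x \<in> quasinilpotent_part (A ^^ n)" by (simp add: quasinilpotent_part_def)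
    then have "(A ^^ n) x = 0" by (rule normal_H0[OF N_bcl N_adj N_normal])
    then show "x \<in> op_kernel (A ^^ n)" by (simp add: op_kernel_def)
  qed
  show "op_kernel (A ^^ n) \<subseteq> quasinilpotent_part A"
    by (auto simp: op_kernel_def intro: ker_H0[OF A])
qed

lemma part1:
  assumes l: "l \<noteq> 0"
  shows "quasinilpotent_part (shift_op A l) = op_kernel (shift_op A l)"
proof
  define T where "T = shift_op A l"
  have T: "bounded_clinear T" by (simp add: T_def bcl_shift[OF A])
  show "op_kernel (shift_op A l) \<subseteq> quasinilpotent_part (shift_op A l)"
    using ker_H0[OF T, where k=1] by (auto simp: op_kernel_def T_def)
  show "quasinilpotent_part (shift_op A l) \<subseteq> op_kernel (shift_op A l)"
  proof
    fix x assume x0: "x \<in> quasinilpotent_part (shift_op A l)"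
    then have x: "x \<in> quasinilpotent_part T" by (simp add: T_def)
    define B where "B = Bk A l n"
    define C where "C = Ck A l n"
    define \<mu> where "\<mu> = l ^ n"
    define N' where "N' = shift_op (A ^^ n) \<mu>"
    have B: "bounded_clinear B" using bcl_Bk[OF A, of l n] by (simp add: B_def)
    have C: "bounded_clinear C" using bcl_Ck[OF A, of l n] by (simp add: C_def)
    have TA: "T (A u) = A (T u)" for u by (simp add: T_def shift_comm_A[OF A])
    have BT: "B (T u) = T (B u)" for u
      using comm_Bk[OF A T TA, of l n u] by (simp add: B_def)
    have CT: "C (T u) = T (C u)" for u
      using comm_Ck[OF A T TA, of l n u] by (simp add: C_def)
    have BC: "B (C u) = C (B u)" for u
    proof -
      have CA: "C (A u) = A (C u)" for u using comm_Ck[OF A A, of l n u] by (simp add: C_def)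
      show ?thesis using comm_Bk[OF A C CA, of l n u] by (simp add: B_def)
    qed
    have TB: "T (B u) = N' u" for u
      using T_Bk[OF A, of l n u] by (simp add: T_def B_def N'_def \<mu>_def shift_op_def)
    \<comment> \<open>step (a): x is in the quasinilpotent part of N'\<close>
    have N'pow: "(N' ^^ m) u = (B ^^ m) ((T ^^ m) u)" for m u
    proof (induction m arbitrary: u)
      case 0 then show ?case by simp
    next
      case (Suc m)
      have "(N' ^^ Suc m) u = (N' ^^ m) (N' u)" by (simp add: funpow_swap1)
      also have "\<dots> = (B ^^ m) ((T ^^ m) (B (T u)))" by (simp add: Suc TB[symmetric] BT)
      also have "(T ^^ m) (B (T u)) = B ((T ^^ m) (T u))"
        by (rule funpow_comm) (simp add: BT)
      finally show ?case by (simp add: funpow_swap1)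
    qed
    obtain KB where KB: "KB > 0" "\<And>m v. norm ((B ^^ m) v) \<le> KB ^ m * norm v"
      using bcl_funpow_bound[OF B] by blast
    have xN: "x \<in> quasinilpotent_part N'"
      by (rule H0_mono[OF KB(1) _ x]) (simp add: N'pow KB(2))
    define Ns' where "Ns' = shift_op (Astar ^^ n) (cnj \<mu>)"
    have N'bcl: "bounded_clinear N'" by (simp add: N'_def bcl_shift[OF N_bcl])
    have N'adj: "cinner (N' u) v = cinner u (Ns' v)" for u v
      unfolding N'_def Ns'_def by (rule adjoint_shift[OF N_adj])
    have N'nor: "Ns' (N' u) = N' (Ns' u)" for u
      unfolding N'_def Ns'_def by (rule normal_shift[OF N_bcl Ns_bcl N_normal])
    have "N' x = 0" by (rule normal_H0[OF N'bcl N'adj N'nor xN])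
    then have Bw: "B (T x) = 0" by (simp add: BT TB)
    define c where "c = of_nat n * l ^ (n - 1)"
    have c: "c \<noteq> 0" using n l by (simp add: c_def)
    have Bdec: "B u = c *\<^sub>C u + T (C u)" for u
      by (simp add: B_def C_def c_def T_def B_C[OF A])
    define D where "D u = (- 1 / c) *\<^sub>C C u" for u
    have D: "bounded_clinear D" unfolding D_def by (rule bcl_scale_op[OF C])
    have DT: "D (T u) = T (D u)" for u by (simp add: D_def CT bcl_scaleC[OF T])
    have BD: "B (D u) = D (B u)" for u by (simp add: D_def BC bcl_scaleC[OF B])
    have kerB: "u = T (D u)" if "B u = 0" for u
    proof -
      have "c *\<^sub>C u = - T (C u)" using that Bdec[of u] by (simp add: eq_neg_iff_add_eq_0)
      then have "(1 / c) *\<^sub>C (c *\<^sub>C u) = (1 / c) *\<^sub>C (- T (C u))" by simp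
      then show ?thesis using c by (simp add: D_def bcl_scaleC[OF T] bcl_minus[OF T] scaleC_minus_right scaleC_minus_left)
    qed
    define w where "w = T x"
    have wB: "B w = 0" using Bw by (simp add: w_def)
    have wH: "w \<in> quasinilpotent_part T" unfolding w_def by (rule H0_apply[OF T x])
    have Dpow_ker: "B ((D ^^ m) w) = 0" for m
    proof (induction m)
      case 0 then show ?case using wB by simp
    next
      case (Suc m) then show ?case by (simp add: BD bcl_zero[OF D])
    qed
    have wpow: "w = (T ^^ m) ((D ^^ m) w)" for m
    proof (induction m)
      case 0 then show ?case by simp
    next
      case (Suc m)
      have "(D ^^ m) w = T (D ((D ^^ m) w))" by (rule kerB[OF Dpow_ker])
      then have "(T ^^ m) ((D ^^ m) w) = (T ^^ m) (T ((D ^^ Suc m) w))" by simp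
      then show ?case using Suc by (simp add: funpow_swap1)
    qed
    obtain KD where KD: "KD > 0" "\<And>m v. norm ((D ^^ m) v) \<le> KD ^ m * norm v"
      using bcl_funpow_bound[OF D] by blast
    have "w = 0"
    proof (rule H0_zero[OF KD(1) _ wH])
      fix m
      have "w = (D ^^ m) ((T ^^ m) w)"
        using wpow[of m] funpow_comm2[of D T m m w, OF DT] by simp
      then show "norm w \<le> KD ^ m * norm ((T ^^ m) w)" using KD(2) by metis
    qed
    then show "x \<in> op_kernel (shift_op A l)" by (simp add: w_def T_def op_kernel_def)
  qed
qed

end

section \<open>Riesz representation\<close>

lemma scaleC_2: "(2::complex) *\<^sub>C u = u + (u::'a::complex_vector)"
  by (metis one_add_one scaleC_add_left scaleC_one)

lemma parallelogram:
  "(norm (a + b))\<^sup>2 + (norm (a - b))\<^sup>2 = 2 * (norm (a::'a::complex_inner))\<^sup>2 + 2 * (norm b)\<^sup>2"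
proof -
  have "cinner (a + b) (a + b) + cinner (a - b) (a - b) = 2 * cinner a a + 2 * cinner b b"
    by (simp add: cinner_simps algebra_simps)
  then have "complex_of_real ((norm (a + b))\<^sup>2 + (norm (a - b))\<^sup>2) = complex_of_real (2 * (norm a)\<^sup>2 + 2 * (norm b)\<^sup>2)"
    by (simp add: cinner_self_norm)
  then show ?thesis by (simp only: of_real_eq_iff)
qed

lemma lim_inv_suc: "(\<lambda>k. 1 / (real k + 1)) \<longlonglongrightarrow> 0"
  using LIMSEQ_inverse_real_of_nat by (simp add: inverse_eq_divide add.commute)

lemma closest_point:
  fixes Z :: "'a::{complex_inner, complete_space} set"
  assumes Zc: "closed Z" and Zne: "z1 \<in> Z"
    and Zmid: "\<And>a b. a \<in> Z \<Longrightarrow> b \<in> Z \<Longrightarrow> (1/2::complex) *\<^sub>C (a + b) \<in> Z"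
  shows "\<exists>z0\<in>Z. \<forall>z\<in>Z. norm (u - z0) \<le> norm (u - z)"
proof -
  define d2 where "d2 = Inf ((\<lambda>z. (norm (u - z))\<^sup>2) ` Z)"
  have bdd: "bdd_below ((\<lambda>z. (norm (u - z))\<^sup>2) ` Z)" by (rule bdd_belowI[of _ 0]) auto
  have d2le: "d2 \<le> (norm (u - z))\<^sup>2" if "z \<in> Z" for z
    unfolding d2_def using that bdd by (simp add: cInf_lower)
  have "\<exists>z\<in>Z. (norm (u - z))\<^sup>2 < d2 + 1 / (real k + 1)" for k
  proof -
    have "d2 < d2 + 1 / (real k + 1)" by simp
    then obtain t where "t \<in> (\<lambda>z. (norm (u - z))\<^sup>2) ` Z" "t < d2 + 1 / (real k + 1)"
      using cInf_lessD[of "(\<lambda>z. (norm (u - z))\<^sup>2) ` Z"] Zne unfolding d2_def by blast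
    then show ?thesis by blast
  qed
  then obtain zs where zs: "\<And>k. zs k \<in> Z" "\<And>k. (norm (u - zs k))\<^sup>2 < d2 + 1 / (real k + 1)"
    by metis
  have dist_bd: "(norm (zs j - zs k))\<^sup>2 \<le> 2 / (real j + 1) + 2 / (real k + 1)" for j k
  proof -
    define m where "m = (1/2::complex) *\<^sub>C (zs j + zs k)"
    have mZ: "m \<in> Z" unfolding m_def by (rule Zmid[OF zs(1) zs(1)])
    have sum: "(u - zs j) + (u - zs k) = (2::complex) *\<^sub>C (u - m)"
      by (simp add: m_def scaleC_diff_right scaleC_add_right scaleC_2 algebra_simps)
    have n2: "norm ((2::complex) *\<^sub>C (u - m)) = 2 * norm (u - m)" by (simp add: norm_scaleC)
    have "(norm (zs j - zs k))\<^sup>2 = (norm ((u - zs k) - (u - zs j)))\<^sup>2"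
      by (simp add: norm_minus_commute algebra_simps)
    also have "\<dots> = 2 * (norm (u - zs j))\<^sup>2 + 2 * (norm (u - zs k))\<^sup>2 - (norm ((u - zs j) + (u - zs k)))\<^sup>2"
      using parallelogram[of "u - zs k" "u - zs j"] by (simp add: add.commute)
    also have "(norm ((u - zs j) + (u - zs k)))\<^sup>2 = 4 * (norm (u - m))\<^sup>2"
      by (simp only: sum n2) (simp add: power2_eq_square)
    finally show ?thesis using zs(2)[of j] zs(2)[of k] d2le[OF mZ] by simp
  qed
  have "Cauchy zs"
  proof (rule CauchyI)
    fix e :: real assume e: "e > 0"
    obtain M :: nat where M: "4 / e\<^sup>2 < real M" using reals_Archimedean2 by blast
    have "\<forall>j\<ge>M. \<forall>k\<ge>M. norm (zs j - zs k) < e"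
    proof (intro allI impI)
      fix j k assume jk: "M \<le> j" "M \<le> k"
      have Mpos: "0 < real M" using M e by (smt (verit) divide_pos_pos zero_less_power)
      have "2 / (real j + 1) \<le> 2 / real M" using jk Mpos by (simp add: frac_le)
      moreover have "2 / (real k + 1) \<le> 2 / real M" using jk Mpos by (simp add: frac_le)
      moreover have "4 / real M < e\<^sup>2" using M e Mpos by (simp add: field_simps)
      ultimately have "(norm (zs j - zs k))\<^sup>2 < e\<^sup>2" using dist_bd[of j k] by simp
      then show "norm (zs j - zs k) < e" using e by (simp add: power_less_imp_less_base)
    qed
    then show "\<exists>M. \<forall>m\<ge>M. \<forall>n\<ge>M. norm (zs m - zs n) < e" by blast
  qed
  then obtain z0 where z0: "zs \<longlonglongrightarrow> z0" using Cauchy_convergent_iff convergent_def by blast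
  have z0Z: "z0 \<in> Z" using closed_sequentially[OF Zc zs(1) z0] .
  have l1: "(\<lambda>k. (norm (u - zs k))\<^sup>2) \<longlonglongrightarrow> (norm (u - z0))\<^sup>2"
    by (intro tendsto_intros z0)
  have l2: "(\<lambda>k. d2 + 1 / (real k + 1)) \<longlonglongrightarrow> d2 + 0"
    by (intro tendsto_intros lim_inv_suc)
  have "(norm (u - z0))\<^sup>2 \<le> d2 + 0"
    by (rule LIMSEQ_le[OF l1 l2]) (use zs(2) less_imp_le in blast)
  then have "(norm (u - z0))\<^sup>2 \<le> (norm (u - z))\<^sup>2" if "z \<in> Z" for z using d2le[OF that] by linarith
  then have "norm (u - z0) \<le> norm (u - z)" if "z \<in> Z" for z
    using that by (meson norm_ge_zero power2_le_imp_le)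
  then show ?thesis using z0Z by blast
qed

lemma orth_min:
  fixes w z :: "'a::complex_inner"
  assumes min: "\<And>t. norm w \<le> norm (w - t *\<^sub>C z)"
  shows "cinner z w = 0"
proof (cases "z = 0")
  case True then show ?thesis by simp
next
  case False
  define N where "N = (norm z)\<^sup>2"
  have N: "N > 0" using False by (simp add: N_def)
  define a where "a = cinner z w"
  define t where "t = a / complex_of_real N"
  have cwz: "cinner w z = cnj a" by (simp add: a_def cinner_commute[of w z])
  have "cinner (w - t *\<^sub>C z) (w - t *\<^sub>C z)
     = cinner w w - t * cnj a - cnj t * a + cnj t * t * complex_of_real N"
    by (simp add: cinner_simps cwz a_def[symmetric] cinner_self_norm[of z] N_def algebra_simps)
  also have "\<dots> = complex_of_real ((norm w)\<^sup>2 - (cmod a)\<^sup>2 / N)"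
    using N by (simp add: t_def cinner_self_norm field_simps) (metis complex_norm_square of_real_power)
  finally have "(norm (w - t *\<^sub>C z))\<^sup>2 = (norm w)\<^sup>2 - (cmod a)\<^sup>2 / N"
    by (simp only: cinner_self_norm of_real_eq_iff)
  moreover have "(norm w)\<^sup>2 \<le> (norm (w - t *\<^sub>C z))\<^sup>2" using min[of t] by (simp add: power_mono)
  ultimately have "(cmod a)\<^sup>2 / N \<le> 0" by simp
  then have "cmod a = 0" using N by (simp add: divide_le_0_iff)
  then show ?thesis by (simp add: a_def)
qed

lemma riesz_rep:
  fixes F :: "'a::{complex_inner, complete_space} \<Rightarrow> complex"
  assumes add: "\<And>y1 y2. F (y1 + y2) = F y1 + F y2"
    and sc: "\<And>c y. F (c *\<^sub>C y) = cnj c * F y"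
    and bd: "\<And>y. cmod (F y) \<le> K * norm y"
  shows "\<exists>v. \<forall>y. F y = cinner y v"
proof (cases "\<forall>y. F y = 0")
  case True then show ?thesis by (intro exI[of _ 0]) simp
next
  case False
  then obtain u where u: "F u \<noteq> 0" by blast
  define Z where "Z = {y. F y = 0}"
  have F0: "F 0 = 0" using sc[of 0 0] by simp
  have Fdiff: "F (a - b) = F a - F b" for a b
    using add[of "a - b" b] by simp
  have contF: "continuous_on UNIV F"
  proof (rule continuous_on_iff[THEN iffD2], intro ballI allI impI)
    fix x :: 'a and e :: real assume e: "e > 0"
    define K' where "K' = max K 1"
    have K': "K' > 0" "K \<le> K'" by (auto simp: K'_def)
    show "\<exists>d>0. \<forall>x'\<in>UNIV. dist x' x < d \<longrightarrow> dist (F x') (F x) < e"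
    proof (intro exI[of _ "e / K'"] conjI ballI impI)
      show "e / K' > 0" using e K' by simp
      fix x' assume "dist x' x < e / K'"
      then have "K' * norm (x' - x) < e" using K' by (simp add: dist_norm field_simps)
      moreover have "cmod (F x' - F x) \<le> K' * norm (x' - x)"
        using bd[of "x' - x"] K' Fdiff[of x' x] by (smt (verit) mult_right_mono norm_ge_zero)
      ultimately show "dist (F x') (F x) < e" by (simp add: dist_norm)
    qed
  qed
  have Zc: "closed Z"
  proof -
    have "closed (F -` {0})" using contF
      by (intro continuous_closed_vimage) (auto simp: continuous_on_eq_continuous_within)
    then show ?thesis by (simp add: Z_def vimage_def)
  qed
  have Zmid: "(1/2::complex) *\<^sub>C (a + b) \<in> Z" if "a \<in> Z" "b \<in> Z" for a b
    using that by (simp add: Z_def sc add)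
  obtain z0 where z0: "z0 \<in> Z" "\<And>z. z \<in> Z \<Longrightarrow> norm (u - z0) \<le> norm (u - z)"
    using closest_point[OF Zc _ Zmid, of 0 u] F0 by (auto simp: Z_def)
  define w where "w = u - z0"
  have Fw: "F w \<noteq> 0" using u z0(1) by (simp add: w_def Fdiff Z_def)
  have w0: "w \<noteq> 0" using Fw F0 by auto
  have orth: "cinner z w = 0" if "z \<in> Z" for z
  proof (rule orth_min)
    fix t
    have "z0 + t *\<^sub>C z \<in> Z" using that z0(1) by (simp add: Z_def add sc)
    then have "norm (u - z0) \<le> norm (u - (z0 + t *\<^sub>C z))" by (rule z0(2))
    then show "norm w \<le> norm (w - t *\<^sub>C z)" by (simp add: w_def algebra_simps)
  qed
  define N where "N = (norm w)\<^sup>2"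
  have N: "N > 0" using w0 by (simp add: N_def)
  show ?thesis
  proof (intro exI[of _ "(F w / complex_of_real N) *\<^sub>C w"] allI)
    fix y
    define z where "z = cnj (F w) *\<^sub>C y - cnj (F y) *\<^sub>C w"
    have "F z = 0" by (simp add: z_def Fdiff sc mult.commute)
    then have "cinner z w = 0" by (intro orth) (simp add: Z_def)
    then have "F w * cinner y w - F y * complex_of_real N = 0"
      by (simp add: z_def cinner_simps cinner_self_norm N_def)
    then have "F y = F w * cinner y w / complex_of_real N" using N by (simp add: field_simps)
    then show "F y = cinner y ((F w / complex_of_real N) *\<^sub>C w)"
      by (simp add: cinner_simps)
  qed
qed

section \<open>Inverses and the resolvent\<close>

lemma inverse_lemma:
  fixes T :: "'a::complex_inner \<Rightarrow> 'a"
  assumes T: "bounded_clinear T" and surj: "\<And>b. \<exists>u. T u = b"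
    and bd: "\<And>u. norm u \<le> K * norm (T u)"
  shows "\<exists>B. bounded_clinear B \<and> B \<circ> T = id \<and> T \<circ> B = id"
proof -
  have inj: "u = v" if "T u = T v" for u v
  proof -
    have "T (u - v) = 0" using that by (simp add: bcl_diff[OF T])
    then have "norm (u - v) \<le> 0" using bd[of "u - v"] by simp
    then show ?thesis by simp
  qed
  define B where "B b = (SOME u. T u = b)" for b
  have TB: "T (B b) = b" for b unfolding B_def by (rule someI_ex[OF surj])
  have BT: "B (T u) = u" for u by (rule inj) (simp add: TB)
  have Badd: "B (x + y) = B x + B y" for x y by (rule inj) (simp add: TB bcl_add[OF T])
  have Bsc: "B (c *\<^sub>C x) = c *\<^sub>C B x" for c x by (rule inj) (simp add: TB bcl_scaleC[OF T])
  have "bounded_linear B"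
  proof (rule bounded_linear_intro[where K=K])
    show "B (x + y) = B x + B y" for x y by (rule Badd)
    show "B (r *\<^sub>R x) = r *\<^sub>R B x" for r x by (simp add: scaleR_scaleC Bsc)
    show "norm (B x) \<le> norm x * K" for x using bd[of "B x"] by (simp add: TB mult.commute)
  qed
  then have "bounded_clinear B" using Bsc by (simp add: bounded_clinear_def)
  then show ?thesis using TB BT by (intro exI[of _ B]) (auto simp: fun_eq_iff)
qed

definition resolv :: "('a::{complex_vector,real_normed_vector} \<Rightarrow> 'a) \<Rightarrow> complex \<Rightarrow> 'a \<Rightarrow> 'a" where
  "resolv A z = (SOME B. bounded_clinear B \<and> B \<circ> shift_op A z = id \<and> shift_op A z \<circ> B = id)"

lemma resolv:
  assumes "z \<notin> op_spectrum A"
  shows "bounded_clinear (resolv A z)" "\<And>u. resolv A z (shift_op A z u) = u"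
    "\<And>u. shift_op A z (resolv A z u) = u"
proof -
  have ex: "\<exists>B. bounded_clinear B \<and> B \<circ> shift_op A z = id \<and> shift_op A z \<circ> B = id"
    using assms unfolding op_spectrum_def by blast
  have "bounded_clinear (resolv A z) \<and> resolv A z \<circ> shift_op A z = id \<and> shift_op A z \<circ> resolv A z = id"
    unfolding resolv_def by (rule someI_ex[OF ex])
  then show "bounded_clinear (resolv A z)" "\<And>u. resolv A z (shift_op A z u) = u"
    "\<And>u. shift_op A z (resolv A z u) = u"
    by (auto simp: fun_eq_iff)
qed

lemma bounded_linear_cinner_right: "bounded_linear (\<lambda>v. cinner y (v::'a::complex_inner))"
proof (rule bounded_linear_intro[where K="norm y"])
  show "cinner y (a + b) = cinner y a + cinner y b" for a b by (simp add: cinner_add_right)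
  show "cinner y (r *\<^sub>R a) = r *\<^sub>R cinner y a" for r a
    by (simp add: scaleR_scaleC cinner_scaleC_right scaleR_conv_of_real)
  show "norm (cinner y a) \<le> norm a * norm y" for a
    using cauchy_schwarz[of y a] by (simp add: mult.commute)
qed

context
  fixes A :: "'a::{complex_inner, complete_space} \<Rightarrow> 'a"
  assumes A: "bounded_clinear A"
begin

lemma neumann:
  assumes z0: "z0 \<notin> op_spectrum A" and M: "M > 0"
    and R0: "\<And>u. norm (resolv A z0 u) \<le> M * norm u"
    and zz: "cmod (z - z0) * M < 1"
  shows "z \<notin> op_spectrum A" "\<And>u. norm (resolv A z u) \<le> M / (1 - cmod (z - z0) * M) * norm u"
proof -
  define R where "R = resolv A z0"
  define c where "c = cmod (z - z0) * M"
  have c: "0 \<le> c" "c < 1" using zz M by (auto simp: c_def)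
  have Rb: "bounded_clinear R" using resolv(1)[OF z0] by (simp add: R_def)
  have RT: "R (shift_op A z0 u) = u" for u using resolv(2)[OF z0] by (simp add: R_def)
  have TR: "shift_op A z0 (R u) = u" for u using resolv(3)[OF z0] by (simp add: R_def)
  have Tz: "shift_op A z u = shift_op A z0 u - (z - z0) *\<^sub>C u" for u
    by (simp add: shift_op_def scaleC_diff_left)
  have Tzb: "bounded_clinear (shift_op A z)" by (rule bcl_shift[OF A])
  have surj: "\<exists>u. shift_op A z u = b" for b
  proof -
    define \<Phi> where "\<Phi> u = R b + (z - z0) *\<^sub>C R u" for u
    have "\<exists>!u. \<Phi> u = u"
    proof (rule banach_fix_type[OF c])
      show "\<forall>x y. dist (\<Phi> x) (\<Phi> y) \<le> c * dist x y"
      proof (intro allI)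
        fix x y
        have "\<Phi> x - \<Phi> y = (z - z0) *\<^sub>C R (x - y)"
          by (simp add: \<Phi>_def bcl_diff[OF Rb] scaleC_diff_right)
        then have "dist (\<Phi> x) (\<Phi> y) = cmod (z - z0) * norm (R (x - y))"
          by (simp add: dist_norm norm_scaleC)
        also have "\<dots> \<le> cmod (z - z0) * (M * norm (x - y))"
          using R0[folded R_def] by (simp add: mult_left_mono R_def)
        finally show "dist (\<Phi> x) (\<Phi> y) \<le> c * dist x y" by (simp add: c_def dist_norm mult_ac)
      qed
    qed
    then obtain u where u: "\<Phi> u = u" by blast
    have "shift_op A z0 u = b + (z - z0) *\<^sub>C u"
    proof -
      have "shift_op A z0 u = shift_op A z0 (\<Phi> u)" using u by simp
      also have "\<dots> = b + (z - z0) *\<^sub>C u"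
        by (simp add: \<Phi>_def bcl_add[OF bcl_shift[OF A]] bcl_scaleC[OF bcl_shift[OF A]] TR)
      finally show ?thesis .
    qed
    then show ?thesis by (intro exI[of _ u]) (simp add: Tz)
  qed
  have bd: "norm u \<le> M / (1 - c) * norm (shift_op A z u)" for u
  proof -
    have "u = R (shift_op A z0 u)" by (simp add: RT)
    also have "shift_op A z0 u = shift_op A z u + (z - z0) *\<^sub>C u" by (simp add: Tz)
    finally have "u = R (shift_op A z u) + (z - z0) *\<^sub>C R u"
      by (simp add: bcl_add[OF Rb] bcl_scaleC[OF Rb])
    then have "norm u \<le> norm (R (shift_op A z u)) + cmod (z - z0) * norm (R u)"
      by (metis norm_scaleC norm_triangle_ineq)
    also have "\<dots> \<le> M * norm (shift_op A z u) + cmod (z - z0) * (M * norm u)"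
      using R0[folded R_def] by (intro add_mono mult_left_mono) auto
    finally have "(1 - c) * norm u \<le> M * norm (shift_op A z u)" by (simp add: c_def algebra_simps)
    then show ?thesis using c by (simp add: field_simps)
  qed
  obtain B where B: "bounded_clinear B \<and> B \<circ> shift_op A z = id \<and> shift_op A z \<circ> B = id"
    using inverse_lemma[OF Tzb surj bd] by blast
  then show zs: "z \<notin> op_spectrum A" by (auto simp: op_spectrum_def)
  fix u
  have "norm (resolv A z u) \<le> M / (1 - c) * norm (shift_op A z (resolv A z u))" by (rule bd)
  then show "norm (resolv A z u) \<le> M / (1 - cmod (z - z0) * M) * norm u"
    by (simp add: resolv(3)[OF zs] c_def)
qed

lemma resolv_bound:
  assumes "z0 \<notin> op_spectrum A"
  obtains M where "M > 0" "\<And>u. norm (resolv A z0 u) \<le> M * norm u"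
  using bcl_bound[OF resolv(1)[OF assms]] by blast

lemma resolv_local_bound_ex:
  assumes z0: "z0 \<notin> op_spectrum A"
  shows "\<exists>r C. r > 0 \<and> C > 0 \<and> (\<forall>z\<in>ball z0 r. z \<notin> op_spectrum A) \<and>
    (\<forall>z\<in>ball z0 r. \<forall>u. norm (resolv A z u) \<le> C * norm u)"
proof -
  obtain M where M: "M > 0" "\<And>u. norm (resolv A z0 u) \<le> M * norm u"
    using resolv_bound[OF z0] by blast
  have *: "z \<notin> op_spectrum A \<and> (\<forall>u. norm (resolv A z u) \<le> (2 * M) * norm u)" if "z \<in> ball z0 (1 / (2 * M))" for z
  proof -
    have d: "cmod (z - z0) * M < 1 / 2" using that M by (simp add: dist_norm norm_minus_commute field_simps)
    then have d1: "cmod (z - z0) * M < 1" by simp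
    have "M / (1 - cmod (z - z0) * M) \<le> 2 * M" using d M by (simp add: field_simps)
    then have "norm (resolv A z u) \<le> (2 * M) * norm u" for u
      using neumann(2)[OF z0 M(1) M(2) d1, of u] by (meson mult_right_mono norm_ge_zero order_trans)
    then show ?thesis using neumann(1)[OF z0 M(1) M(2) d1] by blast
  qed
  show ?thesis by (rule exI[of _ "1 / (2 * M)"], rule exI[of _ "2 * M"]) (use M * in auto)
qed

lemma resolv_local_bound:
  assumes z0: "z0 \<notin> op_spectrum A"
  obtains r C where "r > 0" "C > 0" "\<And>z. z \<in> ball z0 r \<Longrightarrow> z \<notin> op_spectrum A"
    "\<And>z u. z \<in> ball z0 r \<Longrightarrow> norm (resolv A z u) \<le> C * norm u"
  using resolv_local_bound_ex[OF z0] by auto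

lemma open_resolvent: "open (- op_spectrum A)"
proof (rule openI)
  fix z0 assume "z0 \<in> - op_spectrum A"
  then have z0: "z0 \<notin> op_spectrum A" by simp
  obtain r C where "r > 0" "C > 0" "\<And>z. z \<in> ball z0 r \<Longrightarrow> z \<notin> op_spectrum A"
    "\<And>z u. z \<in> ball z0 r \<Longrightarrow> norm (resolv A z u) \<le> C * norm u"
    using resolv_local_bound_ex[OF z0] by auto
  then show "\<exists>e>0. ball z0 e \<subseteq> - op_spectrum A" by blast
qed

lemma closed_spectrum: "closed (op_spectrum A)"
  using open_resolvent by (simp add: closed_def)

lemma resolv_comm:
  assumes z: "z \<notin> op_spectrum A" and C: "bounded_clinear C" and CA: "\<And>u. C (A u) = A (C u)"
  shows "C (resolv A z u) = resolv A z (C u)"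
proof -
  have CT: "C (shift_op A z v) = shift_op A z (C v)" for v
    by (simp add: shift_op_def bcl_diff[OF C] bcl_scaleC[OF C] CA)
  have "C (resolv A z u) = resolv A z (shift_op A z (C (resolv A z u)))" by (simp add: resolv(2)[OF z])
  also have "\<dots> = resolv A z (C u)" by (simp add: CT[symmetric] resolv(3)[OF z])
  finally show ?thesis .
qed

lemma resolv_A_comm:
  assumes z: "z \<notin> op_spectrum A"
  shows "A (resolv A z u) = resolv A z (A u)"
  by (rule resolv_comm[OF z A]) simp

lemma resolvent_identity:
  assumes z: "z \<notin> op_spectrum A" and w: "w \<notin> op_spectrum A"
  shows "resolv A w u - resolv A z u = (w - z) *\<^sub>C resolv A w (resolv A z u)"
proof -
  define v where "v = resolv A z u"
  have "resolv A w u = resolv A w (shift_op A z v)" by (simp add: v_def resolv(3)[OF z])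
  moreover have "resolv A z u = resolv A w (shift_op A w v)" by (simp add: v_def resolv(2)[OF w])
  ultimately have "resolv A w u - resolv A z u = resolv A w (shift_op A z v - shift_op A w v)"
    by (simp add: bcl_diff[OF resolv(1)[OF w]])
  also have "shift_op A z v - shift_op A w v = (w - z) *\<^sub>C v" by (simp add: shift_op_def scaleC_diff_left)
  finally show ?thesis by (simp add: bcl_scaleC[OF resolv(1)[OF w]] v_def)
qed

lemma resolv_cont:
  assumes z0: "z0 \<notin> op_spectrum A"
  shows "((\<lambda>w. resolv A w v) \<longlongrightarrow> resolv A z0 v) (at z0)"
proof -
  obtain r C where rC: "r > 0" "C > 0" "\<And>z. z \<in> ball z0 r \<Longrightarrow> z \<notin> op_spectrum A"
    "\<And>z u. z \<in> ball z0 r \<Longrightarrow> norm (resolv A z u) \<le> C * norm u"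
    using resolv_local_bound_ex[OF z0] by auto
  have ev: "eventually (\<lambda>w. norm (resolv A w v - resolv A z0 v) \<le> cmod (w - z0) * (C * norm (resolv A z0 v))) (at z0)"
    unfolding eventually_at
  proof (intro exI[of _ r] conjI allI impI ballI)
    show "r > 0" by (rule rC(1))
    fix w assume "w \<in> UNIV" "w \<noteq> z0 \<and> dist w z0 < r"
    then have wb: "w \<in> ball z0 r" by (simp add: dist_commute)
    have "resolv A w v - resolv A z0 v = (w - z0) *\<^sub>C resolv A w (resolv A z0 v)"
      by (rule resolvent_identity[OF z0 rC(3)[OF wb]])
    then show "norm (resolv A w v - resolv A z0 v) \<le> cmod (w - z0) * (C * norm (resolv A z0 v))"
      using rC(4)[OF wb] by (simp add: norm_scaleC mult_left_mono)
  qed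
  have "((\<lambda>w. cmod (w - z0) * (C * norm (resolv A z0 v))) \<longlongrightarrow> cmod (z0 - z0) * (C * norm (resolv A z0 v))) (at z0)"
    by (intro tendsto_intros)
  then have "((\<lambda>w. cmod (w - z0) * (C * norm (resolv A z0 v))) \<longlongrightarrow> 0) (at z0)" by simp
  then have "((\<lambda>w. resolv A w v - resolv A z0 v) \<longlongrightarrow> 0) (at z0)"
    by (rule Lim_null_comparison[OF ev])
  then show ?thesis by (rule LIM_zero_cancel)
qed

lemma resolv_deriv:
  assumes z0: "z0 \<notin> op_spectrum A"
  shows "((\<lambda>z. cinner y (resolv A z x)) has_field_derivative cinner y (resolv A z0 (resolv A z0 x))) (at z0)"
proof -
  obtain r C where rC: "r > 0" "C > 0" "\<And>z. z \<in> ball z0 r \<Longrightarrow> z \<notin> op_spectrum A"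
    "\<And>z u. z \<in> ball z0 r \<Longrightarrow> norm (resolv A z u) \<le> C * norm u"
    using resolv_local_bound_ex[OF z0] by auto
  have lim: "((\<lambda>w. cinner y (resolv A w (resolv A z0 x))) \<longlongrightarrow> cinner y (resolv A z0 (resolv A z0 x))) (at z0)"
    by (rule bounded_linear.tendsto[OF bounded_linear_cinner_right resolv_cont[OF z0]])
  show ?thesis unfolding has_field_derivative_iff
  proof (rule Lim_transform_within[OF lim rC(1)])
    fix w assume w: "0 < dist w z0" "dist w z0 < r"
    then have wb: "w \<in> ball z0 r" by (simp add: dist_commute)
    have wz: "w - z0 \<noteq> 0" using w by simp
    have "cinner y (resolv A w x) - cinner y (resolv A z0 x) = (w - z0) * cinner y (resolv A w (resolv A z0 x))"
      using resolvent_identity[OF z0 rC(3)[OF wb], of x]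
      by (metis cinner_diff_right cinner_scaleC_right)
    then show "cinner y (resolv A w (resolv A z0 x)) = (cinner y (resolv A w x) - cinner y (resolv A z0 x)) / (w - z0)"
      using wz by simp
  qed
qed

lemma resolv_holo: "(\<lambda>z. cinner y (resolv A z x)) holomorphic_on (- op_spectrum A)"
  using resolv_deriv by (auto simp: holomorphic_on_open[OF open_resolvent])

lemma resolv_compact_bound:
  assumes K: "compact K" "K \<inter> op_spectrum A = {}"
  obtains C where "C > 0" "\<And>z u. z \<in> K \<Longrightarrow> norm (resolv A z u) \<le> C * norm u"
proof -
  have "\<exists>r C. r > 0 \<and> C > 0 \<and> (\<forall>z u. z \<in> ball z0 r \<longrightarrow> norm (resolv A z u) \<le> C * norm u)"
    if "z0 \<in> K" for z0
  proof -
    have "z0 \<notin> op_spectrum A" using that K(2) by blast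
    then obtain r C where "r > 0" "C > 0" "\<And>z. z \<in> ball z0 r \<Longrightarrow> z \<notin> op_spectrum A"
      "\<And>z u. z \<in> ball z0 r \<Longrightarrow> norm (resolv A z u) \<le> C * norm u"
      using resolv_local_bound_ex[OF \<open>z0 \<notin> op_spectrum A\<close>] by auto
    then show ?thesis by blast
  qed
  then obtain rf Cf where rf: "\<And>z0. z0 \<in> K \<Longrightarrow> rf z0 > 0 \<and> Cf z0 > 0 \<and>
      (\<forall>z u. z \<in> ball z0 (rf z0) \<longrightarrow> norm (resolv A z u) \<le> Cf z0 * norm u)"
    by metis
  have cov: "K \<subseteq> (\<Union>z0\<in>K. ball z0 (rf z0))" using rf by force
  obtain D where D: "D \<subseteq> K" "finite D" "K \<subseteq> (\<Union>z0\<in>D. ball z0 (rf z0))"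
    by (rule compactE_image[OF K(1) _ cov]) auto
  define C where "C = 1 + (\<Sum>z0\<in>D. Cf z0)"
  have "0 \<le> (\<Sum>z0\<in>D. Cf z0)" by (rule sum_nonneg) (use rf D(1) in \<open>auto intro: less_imp_le\<close>)
  then have Cpos: "C > 0" by (simp add: C_def)
  show ?thesis
  proof (rule that[OF Cpos])
    fix z u assume "z \<in> K"
    then obtain z0 where z0: "z0 \<in> D" "z \<in> ball z0 (rf z0)" using D(3) by blast
    have "norm (resolv A z u) \<le> Cf z0 * norm u" using rf z0 D(1) by blast
    also have "Cf z0 \<le> C"
    proof -
      have "Cf z0 \<le> sum Cf D" by (rule member_le_sum[OF z0(1) _ D(2)]) (use rf D(1) in \<open>auto intro: less_imp_le\<close>)
      then show ?thesis by (simp add: C_def)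
    qed
    then have "Cf z0 * norm u \<le> C * norm u" by (simp add: mult_right_mono)
    finally show "norm (resolv A z u) \<le> C * norm u" .
  qed
qed

end

lemma weak_operator:
  fixes F :: "'a::{complex_inner,complete_space} \<Rightarrow> 'a \<Rightarrow> complex"
  assumes addy: "\<And>x y1 y2. F x (y1 + y2) = F x y1 + F x y2"
    and scy: "\<And>x c y. F x (c *\<^sub>C y) = cnj c * F x y"
    and addx: "\<And>x1 x2 y. F (x1 + x2) y = F x1 y + F x2 y"
    and scx: "\<And>c x y. F (c *\<^sub>C x) y = c * F x y"
    and K: "0 \<le> K"
    and bd: "\<And>x y. cmod (F x y) \<le> K * norm x * norm y"
  shows "\<exists>B. bounded_clinear B \<and> (\<forall>x y. cinner y (B x) = F x y)"
proof -
  have "\<exists>v. \<forall>y. F x y = cinner y v" for x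
    by (rule riesz_rep[where K="K * norm x"]) (auto simp: addy scy bd)
  then obtain B where B: "\<And>x y. F x y = cinner y (B x)" by metis
  have Badd: "B (x1 + x2) = B x1 + B x2" for x1 x2
    by (rule cinner_ext_right) (simp add: B[symmetric] addx cinner_add_right)
  have Bsc: "B (c *\<^sub>C x) = c *\<^sub>C B x" for c x
    by (rule cinner_ext_right) (simp add: B[symmetric] scx cinner_scaleC_right)
  have Bbd: "norm (B x) \<le> norm x * K" for x
  proof -
    have "(norm (B x))\<^sup>2 = Re (cinner (B x) (B x))" by (simp add: cinner_self_norm)
    also have "\<dots> \<le> cmod (F x (B x))" by (simp add: B complex_Re_le_cmod)
    also have "\<dots> \<le> K * norm x * norm (B x)" by (rule bd)
    finally have "norm (B x) * norm (B x) \<le> (norm x * K) * norm (B x)"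
      by (simp add: power2_eq_square mult_ac)
    then show ?thesis
      by (cases "norm (B x) = 0") (use K in \<open>auto simp: mult_le_cancel_right\<close>)
  qed
  have "bounded_linear B"
  proof (rule bounded_linear_intro[where K=K])
    show "B (x + y) = B x + B y" for x y by (rule Badd)
    show "B (r *\<^sub>R x) = r *\<^sub>R B x" for r x by (simp add: scaleR_scaleC Bsc)
    show "norm (B x) \<le> norm x * K" for x by (rule Bbd)
  qed
  then show ?thesis using Bsc B by (auto simp: bounded_clinear_def)
qed

lemma H0_diff:
  assumes T: "bounded_clinear (T::'a::complex_inner \<Rightarrow> 'a)"
    and a: "a \<in> quasinilpotent_part T" and b: "b \<in> quasinilpotent_part T"
  shows "a - b \<in> quasinilpotent_part T"
proof -
  define \<alpha> where "\<alpha> m = norm ((T ^^ m) a) powr (1 / real m)" for m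
  define \<beta> where "\<beta> m = norm ((T ^^ m) b) powr (1 / real m)" for m
  have la: "\<alpha> \<longlonglongrightarrow> 0" using a by (simp add: quasinilpotent_part_def \<alpha>_def[abs_def])
  have lb: "\<beta> \<longlonglongrightarrow> 0" using b by (simp add: quasinilpotent_part_def \<beta>_def[abs_def])
  have l2: "(\<lambda>m. 2 powr (1 / real m) * (\<alpha> m + \<beta> m)) \<longlonglongrightarrow> 2 powr 0 * (0 + 0)"
    by (intro tendsto_mult tendsto_add la lb tendsto_powr tendsto_const lim_1_over_n) simp
  have bd: "norm ((T ^^ m) (a - b)) powr (1 / real m) \<le> 2 powr (1 / real m) * (\<alpha> m + \<beta> m)" for m
  proof -
    define x where "x = norm ((T ^^ m) a)"
    define y where "y = norm ((T ^^ m) b)"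
    have "(T ^^ m) (a - b) = (T ^^ m) a - (T ^^ m) b" by (rule bcl_diff[OF bcl_funpow[OF T]])
    then have "norm ((T ^^ m) (a - b)) \<le> 2 * max x y"
      using norm_triangle_ineq4[of "(T ^^ m) a" "(T ^^ m) b"] by (simp add: x_def y_def)
    then have "norm ((T ^^ m) (a - b)) powr (1 / real m) \<le> (2 * max x y) powr (1 / real m)"
      by (intro powr_mono2) auto
    also have "\<dots> = 2 powr (1 / real m) * (max x y) powr (1 / real m)" by (rule powr_mult)
    also have "(max x y) powr (1 / real m) \<le> \<alpha> m + \<beta> m"
      by (cases "x \<le> y") (auto simp: max_def \<alpha>_def \<beta>_def x_def y_def)
    then have "2 powr (1 / real m) * (max x y) powr (1 / real m) \<le> 2 powr (1 / real m) * (\<alpha> m + \<beta> m)"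
      by (simp add: mult_left_mono)
    finally show ?thesis .
  qed
  have "(\<lambda>m. norm ((T ^^ m) (a - b)) powr (1 / real m)) \<longlonglongrightarrow> 0"
  proof (rule tendsto_sandwich[where f="\<lambda>_. 0" and h="\<lambda>m. 2 powr (1 / real m) * (\<alpha> m + \<beta> m)"])
    show "eventually (\<lambda>m. (0::real) \<le> norm ((T ^^ m) (a - b)) powr (1 / real m)) sequentially"
      by (intro eventuallyI) simp
    show "eventually (\<lambda>m. norm ((T ^^ m) (a - b)) powr (1 / real m) \<le> 2 powr (1 / real m) * (\<alpha> m + \<beta> m)) sequentially"
      by (intro eventuallyI bd)
    show "((\<lambda>_. 0) \<longlongrightarrow> (0::real)) sequentially" by (rule tendsto_const)
    show "(\<lambda>m. 2 powr (1 / real m) * (\<alpha> m + \<beta> m)) \<longlonglongrightarrow> 0" using l2 by simp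
  qed
  then show ?thesis by (simp add: quasinilpotent_part_def)
qed

lemma H0_radius:
  assumes d: "\<delta> > 0"
    and bd: "\<And>r. 0 < r \<Longrightarrow> r < \<delta> \<Longrightarrow> \<exists>K>0. \<forall>m. norm ((T ^^ m) v) \<le> K * r ^ m"
  shows "v \<in> quasinilpotent_part T"
proof -
  define f where "f m = norm ((T ^^ m) v) powr (1 / real m)" for m
  have "f \<longlonglongrightarrow> 0"
  proof (rule order_tendstoI)
    fix a :: real assume "a < 0"
    then have "a < f m" for m unfolding f_def using powr_ge_zero less_le_trans by blast
    then show "eventually (\<lambda>m. a < f m) sequentially" by simp
  next
    fix e :: real assume e: "0 < e"
    define r where "r = min (\<delta> / 2) (e / 2)"
    have r: "0 < r" "r < \<delta>" "2 * r \<le> e" using d e by (auto simp: r_def)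
    obtain K where K: "K > 0" "\<And>m. norm ((T ^^ m) v) \<le> K * r ^ m" using bd[OF r(1) r(2)] by blast
    have "(\<lambda>m. K powr (1 / real m)) \<longlonglongrightarrow> K powr 0"
      by (intro tendsto_powr tendsto_const lim_1_over_n) (use K in simp)
    then have "eventually (\<lambda>m. K powr (1 / real m) < 2) sequentially"
      using K by (intro order_tendstoD(2)) auto
    then show "eventually (\<lambda>m. f m < e) sequentially"
      using eventually_gt_at_top[of 0]
    proof eventually_elim
      case (elim m)
      have "f m \<le> (K * r ^ m) powr (1 / real m)" unfolding f_def
        using K(2)[of m] by (intro powr_mono2) auto
      also have "\<dots> = K powr (1 / real m) * r" using r elim by (simp add: powr_mult pow_powr_inv)
      also have "\<dots> < 2 * r" using elim r by simp
      finally show ?case using r by simp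
    qed
  qed
  then show ?thesis by (simp add: quasinilpotent_part_def f_def[abs_def])
qed

section \<open>Ascent and descent from a spectral decomposition\<close>

lemma ascent_descent_decomp:
  fixes T P S :: "'a::complex_inner \<Rightarrow> 'a"
  assumes T: "bounded_clinear T" and P: "bounded_clinear P" and S: "bounded_clinear S"
    and PP: "\<And>x. P (P x) = P x" and PT: "\<And>x. P (T x) = T (P x)"
    and ST: "\<And>x. S (T x) = x - P x" and TS: "\<And>x. T (S x) = x - P x"
    and Mker: "\<And>x. P x = x \<longleftrightarrow> (T ^^ p) x = 0"
  shows "\<exists>q. is_ascent T q \<and> is_descent T q \<and> (q = 0 \<longrightarrow> (\<forall>x. P x = 0))"
proof -
  have PTq: "P ((T ^^ q) x) = (T ^^ q) (P x)" for q x by (rule funpow_comm[of T P, symmetric]) (simp add: PT)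
  have Tq0: "(T ^^ q) 0 = 0" for q by (rule funpow_zero[OF T])
  have Tqdiff: "(T ^^ q) (a - b) = (T ^^ q) a - (T ^^ q) b" for q a b by (rule bcl_diff[OF bcl_funpow[OF T]])
  have Tadd': "(T ^^ (q + j)) x = (T ^^ q) ((T ^^ j) x)" for q j x by (simp add: funpow_add)
  have Tadd: "(T ^^ (q + j)) x = (T ^^ j) ((T ^^ q) x)" for q j x
    using Tadd'[of j q x] by (simp add: add.commute)
  have Tcomp: "T ^^ (q + j) = T ^^ j \<circ> T ^^ q" for q j
    by (simp add: fun_eq_iff Tadd)
  have PS: "P (S x) = S (P x)" for x
  proof -
    have "S x - P (S x) = S (T (S x))" by (simp add: ST)
    also have "\<dots> = S (x - P x)" by (simp add: TS)
    also have "\<dots> = S x - S (P x)" by (rule bcl_diff[OF S])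
    finally show ?thesis by simp
  qed
  have P0: "P 0 = 0" by (rule bcl_zero[OF P])
  have PK: "P (x - P x) = 0" for x by (simp add: bcl_diff[OF P] PP)
  \<comment> \<open>(a) kernels of powers are inside the range of P\<close>
  have STq: "(S ^^ q) ((T ^^ q) v) = v" if "P v = 0" for q v
    using that
  proof (induction q arbitrary: v)
    case 0 then show ?case by simp
  next
    case (Suc q)
    have "P ((T ^^ q) v) = 0" using Suc.prems by (simp add: PTq bcl_zero[OF bcl_funpow[OF T]])
    then have "S ((T ^^ Suc q) v) = (T ^^ q) v" by (simp add: ST)
    then have "(S ^^ Suc q) ((T ^^ Suc q) v) = (S ^^ q) ((T ^^ q) v)" by (simp add: funpow_swap1)
    then show ?case using Suc by simp
  qed
  have kerM: "P x = x" if "(T ^^ q) x = 0" for q x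
  proof -
    define v where "v = x - P x"
    have Pv: "P v = 0" by (simp add: v_def PK)
    have "(T ^^ q) v = (T ^^ q) x - P ((T ^^ q) x)" by (simp add: v_def Tqdiff PTq)
    then have "(T ^^ q) v = 0" using that by (simp add: P0)
    then have "v = 0" using STq[OF Pv, of q] by (simp add: funpow_zero[OF S])
    then show ?thesis by (simp add: v_def)
  qed
  have TSq: "(T ^^ q) ((S ^^ q) v) = v" if "P v = 0" for q v
    using that
  proof (induction q arbitrary: v)
    case 0 then show ?case by simp
  next
    case (Suc q)
    have PSv: "P (S v) = 0" using Suc.prems by (simp add: PS bcl_zero[OF S])
    have "(T ^^ Suc q) ((S ^^ Suc q) v) = T ((T ^^ q) ((S ^^ q) (S v)))" by (simp add: funpow_swap1)
    also have "(T ^^ q) ((S ^^ q) (S v)) = S v" by (rule Suc.IH[OF PSv])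
    also have "T (S v) = v" using Suc.prems by (simp add: TS)
    finally show ?case .
  qed
  define stab where "stab q \<longleftrightarrow> (\<forall>x. (T ^^ q) (P x) = 0)" for q
  have stab_p: "stab p" unfolding stab_def using Mker PP by blast
  have stab_mono: "stab (q + j)" if "stab q" for q j
    using that by (simp add: stab_def Tadd Tq0)
  have ker_stab: "op_kernel (T ^^ q) = {x. P x = x}" if "stab q" for q
  proof
    show "op_kernel (T ^^ q) \<subseteq> {x. P x = x}" using kerM by (auto simp: op_kernel_def)
    show "{x. P x = x} \<subseteq> op_kernel (T ^^ q)"
    proof
      fix x assume "x \<in> {x. P x = x}"
      then have "(T ^^ q) x = (T ^^ q) (P x)" by simp
      also have "\<dots> = 0" using that by (simp add: stab_def)
      finally show "x \<in> op_kernel (T ^^ q)" by (simp add: op_kernel_def)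
    qed
  qed
  have range_stab: "range (T ^^ q) = {x. P x = 0}" if "stab q" for q
  proof
    show "range (T ^^ q) \<subseteq> {x. P x = 0}" using that by (auto simp: stab_def PTq)
    show "{x. P x = 0} \<subseteq> range (T ^^ q)"
    proof
      fix v assume "v \<in> {x. P x = 0}"
      then have "(T ^^ q) ((S ^^ q) v) = v" using TSq by simp
      then show "v \<in> range (T ^^ q)" by (metis rangeI)
    qed
  qed
  have ker_iff: "op_kernel (T ^^ q) = op_kernel (T ^^ Suc q) \<longleftrightarrow> stab q" for q
  proof
    assume s: "stab q"
    then have s1: "stab (Suc q)" using stab_mono[of q 1] by simp
    show "op_kernel (T ^^ q) = op_kernel (T ^^ Suc q)" using ker_stab[OF s] ker_stab[OF s1] by (simp only:)
  next
    assume eq: "op_kernel (T ^^ q) = op_kernel (T ^^ Suc q)"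
    have all: "op_kernel (T ^^ q) = op_kernel (T ^^ (q + j))" for j
    proof (induction j)
      case 0 then show ?case by simp
    next
      case (Suc j)
      have "op_kernel (T ^^ (q + Suc j)) \<subseteq> op_kernel (T ^^ (q + j))"
      proof
        fix x assume "x \<in> op_kernel (T ^^ (q + Suc j))"
        then have "(T ^^ (Suc q + j)) x = 0" by (simp add: op_kernel_def)
        then have "(T ^^ Suc q) ((T ^^ j) x) = 0" by (simp only: Tadd')
        then have "(T ^^ j) x \<in> op_kernel (T ^^ q)" using eq by (simp add: op_kernel_def)
        then show "x \<in> op_kernel (T ^^ (q + j))" by (simp add: op_kernel_def Tadd')
      qed
      moreover have "op_kernel (T ^^ (q + j)) \<subseteq> op_kernel (T ^^ (q + Suc j))"
        by (auto simp: op_kernel_def bcl_zero[OF T])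
      ultimately show ?case using Suc by blast
    qed
    show "stab q" unfolding stab_def
    proof
      fix x
      have "(T ^^ p) (P x) = 0" using Mker PP by blast
      then have "(T ^^ (q + p)) (P x) = 0" by (simp add: Tadd' Tq0)
      then have "P x \<in> op_kernel (T ^^ q)" using all[of p] by (simp add: op_kernel_def)
      then show "(T ^^ q) (P x) = 0" by (simp add: op_kernel_def)
    qed
  qed
  have range_iff: "range (T ^^ q) = range (T ^^ Suc q) \<longleftrightarrow> stab q" for q
  proof
    assume s: "stab q"
    then have s1: "stab (Suc q)" using stab_mono[of q 1] by simp
    show "range (T ^^ q) = range (T ^^ Suc q)" using range_stab[OF s] range_stab[OF s1] by (simp only:)
  next
    assume eq: "range (T ^^ q) = range (T ^^ Suc q)"
    have all: "range (T ^^ q) = range (T ^^ (q + j))" for j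
    proof (induction j)
      case 0 then show ?case by simp
    next
      case (Suc j)
      have "range (T ^^ (q + Suc j)) = range (T ^^ (Suc q + j))" by simp
      also have "\<dots> = (T ^^ j) ` range (T ^^ Suc q)" by (simp only: Tcomp image_comp)
      also have "\<dots> = (T ^^ j) ` range (T ^^ q)" using eq by simp
      also have "\<dots> = range (T ^^ (q + j))" by (simp only: Tcomp image_comp)
      finally show ?case using Suc by simp
    qed
    show "stab q" unfolding stab_def
    proof
      fix x
      have "stab (q + p)" using stab_mono[OF stab_p, of q] by (simp add: add.commute)
      then have "range (T ^^ (q + p)) = {x. P x = 0}" by (rule range_stab)
      then have "(T ^^ q) (P x) \<in> {x. P x = 0}" using all[of p] by blast
      then have "P ((T ^^ q) (P x)) = 0" by simp
      moreover have "P ((T ^^ q) (P x)) = (T ^^ q) (P x)" by (simp add: PTq PP)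
      ultimately show "(T ^^ q) (P x) = 0" by simp
    qed
  qed
  define q0 where "q0 = (LEAST q. stab q)"
  have sq0: "stab q0" unfolding q0_def by (rule LeastI[of stab p, OF stab_p])
  have nq: "\<not> stab q" if "q < q0" for q using not_less_Least[of q stab] that by (simp add: q0_def)
  have "is_ascent T q0" unfolding is_ascent_def using ker_iff sq0 nq by blast
  moreover have "is_descent T q0" unfolding is_descent_def using range_iff sq0 nq by blast
  moreover have "q0 = 0 \<longrightarrow> (\<forall>x. P x = 0)" using sq0 by (auto simp: stab_def)
  ultimately show ?thesis by blast
qed

section \<open>Riesz projection at an isolated point of the spectrum\<close>

locale isol =
  fixes A Astar :: "'a::{complex_inner, complete_space} \<Rightarrow> 'a" and l :: complex and \<delta> :: real
  assumes A: "bounded_clinear A"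
    and adj: "\<And>x y. cinner (A x) y = cinner x (Astar y)"
    and \<delta>: "\<delta> > 0"
    and iso: "\<And>z. z \<in> ball l \<delta> \<Longrightarrow> z \<noteq> l \<Longrightarrow> z \<notin> op_spectrum A"
begin

definition gf :: "'a \<Rightarrow> 'a \<Rightarrow> complex \<Rightarrow> complex" where
  "gf x y = (\<lambda>z. cinner y (resolv A z x))"

lemma inD: "z \<in> ball l \<delta> - {l} \<Longrightarrow> z \<notin> op_spectrum A"
  using iso by auto

lemma D_sub: "ball l \<delta> - {l} \<subseteq> - op_spectrum A"
  using inD by auto

lemma gf_holo: "gf x y holomorphic_on (ball l \<delta> - {l})"
  unfolding gf_def by (rule holomorphic_on_subset[OF resolv_holo[OF A] D_sub])

lemma l_in: "l \<in> ball l \<delta>" using \<delta> by simp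

lemma res_eq:
  assumes "\<And>z. z \<in> ball l \<delta> - {l} \<Longrightarrow> f z = g z"
  shows "residue f l = residue g l"
proof (rule residue_cong)
  show "eventually (\<lambda>z. f z = g z) (at l)"
    unfolding eventually_at using \<delta> assms by (intro exI[of _ \<delta>]) (auto simp: dist_commute)
qed simp

lemma sphere_in_D: "0 < r \<Longrightarrow> r < \<delta> \<Longrightarrow> cmod (z - l) = r \<Longrightarrow> z \<in> ball l \<delta> - {l}"
  by (auto simp: dist_norm norm_minus_commute)

lemma sphere_sub:
  assumes r: "0 < r" "r < \<delta>" shows "sphere l r \<subseteq> ball l \<delta> - {l}"
proof
  fix z assume "z \<in> sphere l r"
  then have "cmod (z - l) = r" by (simp add: dist_norm norm_minus_commute)
  then show "z \<in> ball l \<delta> - {l}" by (rule sphere_in_D[OF r])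
qed

lemma res_bound:
  assumes holo: "f holomorphic_on (ball l \<delta> - {l})" and r: "0 < r" "r < \<delta>" and B: "0 \<le> B"
    and bd: "\<And>z. cmod (z - l) = r \<Longrightarrow> cmod (f z) \<le> B"
  shows "cmod (residue f l) \<le> B * r"
proof -
  have cb: "cball l r \<subseteq> ball l \<delta>" using r by (auto simp: dist_norm)
  have "(f has_contour_integral 2 * pi * \<i> * residue f l) (circlepath l r)"
    by (rule base_residue[OF open_ball l_in r(1) holo cb])
  then have "norm (2 * pi * \<i> * residue f l) \<le> B * (2 * pi * r)"
    by (rule has_contour_integral_bound_circlepath[OF _ B r(1)]) (simp add: bd)
  then have "2 * pi * cmod (residue f l) \<le> 2 * pi * (B * r)"
    by (simp add: norm_mult mult_ac)
  then show ?thesis by simp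
qed

lemma circle_bound:
  assumes r: "0 < r" "r < \<delta>"
  shows "\<exists>C>0. \<forall>z u. cmod (z - l) = r \<longrightarrow> norm (resolv A z u) \<le> C * norm u"
proof -
  have "sphere l r \<inter> op_spectrum A = {}"
    using inD sphere_sub[OF r] by blast
  then obtain C where "C > 0" "\<And>z u. z \<in> sphere l r \<Longrightarrow> norm (resolv A z u) \<le> C * norm u"
    using resolv_compact_bound[OF A compact_sphere] by metis
  then show ?thesis by (intro exI[of _ C]) (auto simp: dist_norm norm_minus_commute)
qed

lemma gf_add_y: "gf x (y1 + y2) z = gf x y1 z + gf x y2 z"
  by (simp add: gf_def cinner_add_left)

lemma gf_sc_y: "gf x (c *\<^sub>C y) z = cnj c * gf x y z"
  by (simp add: gf_def cinner_scaleC_left)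

lemma gf_add_x: "z \<in> ball l \<delta> - {l} \<Longrightarrow> gf (x1 + x2) y z = gf x1 y z + gf x2 y z"
  by (simp add: gf_def bcl_add[OF resolv(1)[OF inD]] cinner_add_right)

lemma gf_sc_x: "z \<in> ball l \<delta> - {l} \<Longrightarrow> gf (c *\<^sub>C x) y z = c * gf x y z"
  by (simp add: gf_def bcl_scaleC[OF resolv(1)[OF inD]] cinner_scaleC_right)

lemma cinner_A_right: "cinner y (A v) = cinner (Astar y) v"
  by (metis adj cinner_commute)

lemma W_exists:
  assumes \<phi>: "\<phi> holomorphic_on (ball l \<delta> - {l})"
  shows "\<exists>B. bounded_clinear B \<and> (\<forall>x y. cinner y (B x) = residue (\<lambda>z. \<phi> z * gf x y z) l)"
proof -
  define r where "r = \<delta> / 2"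
  have r: "0 < r" "r < \<delta>" using \<delta> by (auto simp: r_def)
  obtain C where C: "C > 0" "\<And>z u. cmod (z - l) = r \<Longrightarrow> norm (resolv A z u) \<le> C * norm u"
    using circle_bound[OF r] by blast
  have "compact (\<phi> ` sphere l r)"
  proof (rule compact_continuous_image[OF _ compact_sphere])
    have "sphere l r \<subseteq> ball l \<delta> - {l}" by (rule sphere_sub[OF r])
    then show "continuous_on (sphere l r) \<phi>"
      by (rule continuous_on_subset[OF holomorphic_on_imp_continuous_on[OF \<phi>]])
  qed
  then obtain B\<phi> where B\<phi>: "B\<phi> > 0" "\<And>z. z \<in> sphere l r \<Longrightarrow> cmod (\<phi> z) \<le> B\<phi>"
    using compact_imp_bounded bounded_pos by (metis image_eqI)
  have holo: "(\<lambda>z. \<phi> z * gf x y z) holomorphic_on (ball l \<delta> - {l})" for x y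
    by (intro holomorphic_intros \<phi> gf_holo)
  show ?thesis
  proof (rule weak_operator)
    fix x y1 y2
    show "residue (\<lambda>z. \<phi> z * gf x (y1 + y2) z) l = residue (\<lambda>z. \<phi> z * gf x y1 z) l + residue (\<lambda>z. \<phi> z * gf x y2 z) l"
      by (simp add: gf_add_y distrib_left residue_add[OF open_ball l_in holo holo])
  next
    fix x c y
    show "residue (\<lambda>z. \<phi> z * gf x (c *\<^sub>C y) z) l = cnj c * residue (\<lambda>z. \<phi> z * gf x y z) l"
      using residue_lmul[OF open_ball l_in holo[of x y], where c="cnj c"] by (simp add: gf_sc_y mult_ac)
  next
    fix x1 x2 y
    have "residue (\<lambda>z. \<phi> z * gf (x1 + x2) y z) l = residue (\<lambda>z. \<phi> z * gf x1 y z + \<phi> z * gf x2 y z) l"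
      by (rule res_eq) (simp add: gf_add_x distrib_left)
    then show "residue (\<lambda>z. \<phi> z * gf (x1 + x2) y z) l = residue (\<lambda>z. \<phi> z * gf x1 y z) l + residue (\<lambda>z. \<phi> z * gf x2 y z) l"
      by (simp add: residue_add[OF open_ball l_in holo holo])
  next
    fix c x y
    have "residue (\<lambda>z. \<phi> z * gf (c *\<^sub>C x) y z) l = residue (\<lambda>z. c * (\<phi> z * gf x y z)) l"
      by (rule res_eq) (simp add: gf_sc_x mult_ac)
    then show "residue (\<lambda>z. \<phi> z * gf (c *\<^sub>C x) y z) l = c * residue (\<lambda>z. \<phi> z * gf x y z) l"
      by (simp add: residue_lmul[OF open_ball l_in holo])
  next
    show "0 \<le> B\<phi> * C * r" using B\<phi> C r by simp
  next
    fix x y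
    have "cmod (residue (\<lambda>z. \<phi> z * gf x y z) l) \<le> (B\<phi> * (C * norm x * norm y)) * r"
    proof (rule res_bound[OF holo r])
      show "0 \<le> B\<phi> * (C * norm x * norm y)" using B\<phi> C by simp
      fix z assume z: "cmod (z - l) = r"
      have "cmod (gf x y z) \<le> norm y * norm (resolv A z x)" unfolding gf_def by (rule cauchy_schwarz)
      also have "\<dots> \<le> norm y * (C * norm x)" using C(2)[OF z] by (simp add: mult_left_mono)
      finally have g: "cmod (gf x y z) \<le> C * norm x * norm y" by (simp add: mult_ac)
      have "cmod (\<phi> z) \<le> B\<phi>" using B\<phi>(2)[of z] z by (simp add: dist_norm norm_minus_commute)
      then show "cmod (\<phi> z * gf x y z) \<le> B\<phi> * (C * norm x * norm y)"
        unfolding norm_mult using g B\<phi>(1) by (intro mult_mono) auto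
    qed
    then show "cmod (residue (\<lambda>z. \<phi> z * gf x y z) l) \<le> B\<phi> * C * r * norm x * norm y"
      by (simp add: mult_ac)
  qed
qed

definition Wop :: "(complex \<Rightarrow> complex) \<Rightarrow> 'a \<Rightarrow> 'a" where
  "Wop \<phi> = (SOME B. bounded_clinear B \<and> (\<forall>x y. cinner y (B x) = residue (\<lambda>z. \<phi> z * gf x y z) l))"

lemma Wop:
  assumes \<phi>: "\<phi> holomorphic_on (ball l \<delta> - {l})"
  shows "bounded_clinear (Wop \<phi>)" "\<And>x y. cinner y (Wop \<phi> x) = residue (\<lambda>z. \<phi> z * gf x y z) l"
proof -
  have "bounded_clinear (Wop \<phi>) \<and> (\<forall>x y. cinner y (Wop \<phi> x) = residue (\<lambda>z. \<phi> z * gf x y z) l)"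
    unfolding Wop_def by (rule someI_ex[OF W_exists[OF \<phi>]])
  then show "bounded_clinear (Wop \<phi>)" "\<And>x y. cinner y (Wop \<phi> x) = residue (\<lambda>z. \<phi> z * gf x y z) l"
    by auto
qed

lemma Wop_A:
  assumes \<phi>: "\<phi> holomorphic_on (ball l \<delta> - {l})"
  shows "Wop \<phi> (A x) = A (Wop \<phi> x)"
proof (rule cinner_ext_right)
  fix y
  have "cinner y (Wop \<phi> (A x)) = residue (\<lambda>z. \<phi> z * gf (A x) y z) l" by (rule Wop(2)[OF \<phi>])
  also have "\<dots> = residue (\<lambda>z. \<phi> z * gf x (Astar y) z) l"
  proof (rule res_eq)
    fix z assume z: "z \<in> ball l \<delta> - {l}"
    have "resolv A z (A x) = A (resolv A z x)" by (rule resolv_A_comm[OF A inD[OF z], symmetric])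
    then show "\<phi> z * gf (A x) y z = \<phi> z * gf x (Astar y) z" by (simp add: gf_def cinner_A_right)
  qed
  also have "\<dots> = cinner (Astar y) (Wop \<phi> x)" by (rule Wop(2)[OF \<phi>, symmetric])
  also have "\<dots> = cinner y (A (Wop \<phi> x))" by (rule cinner_A_right[symmetric])
  finally show "cinner y (Wop \<phi> (A x)) = cinner y (A (Wop \<phi> x))" .
qed

end

context isol
begin

definition Pr :: "'a \<Rightarrow> 'a" where "Pr = Wop (\<lambda>_. -1)"
definition Sr :: "'a \<Rightarrow> 'a" where "Sr = Wop (\<lambda>z. 1 / (z - l))"
definition Tl :: "'a \<Rightarrow> 'a" where "Tl = shift_op A l"

lemma hP: "(\<lambda>_. -1) holomorphic_on (ball l \<delta> - {l})" by simp
lemma hS: "(\<lambda>z. 1 / (z - l)) holomorphic_on (ball l \<delta> - {l})" by (intro holomorphic_intros) auto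

lemma Pr_bcl: "bounded_clinear Pr" unfolding Pr_def by (rule Wop(1)[OF hP])
lemma Sr_bcl: "bounded_clinear Sr" unfolding Sr_def by (rule Wop(1)[OF hS])
lemma Tl_bcl: "bounded_clinear Tl" unfolding Tl_def by (rule bcl_shift[OF A])

lemma Pr_weak: "cinner y (Pr x) = - residue (gf x y) l"
proof -
  have "cinner y (Pr x) = residue (\<lambda>z. -1 * gf x y z) l" unfolding Pr_def by (rule Wop(2)[OF hP])
  also have "\<dots> = -1 * residue (\<lambda>z. gf x y z) l"
    by (rule residue_lmul[OF open_ball l_in gf_holo])
  finally show ?thesis by simp
qed

lemma Sr_weak: "cinner y (Sr x) = residue (\<lambda>z. 1 / (z - l) * gf x y z) l"
  unfolding Sr_def by (rule Wop(2)[OF hS])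

lemma Pr_A: "Pr (A x) = A (Pr x)" unfolding Pr_def by (rule Wop_A[OF hP])
lemma Sr_A: "Sr (A x) = A (Sr x)" unfolding Sr_def by (rule Wop_A[OF hS])

lemma comm_Tl:
  assumes B: "bounded_clinear B" and BA: "\<And>x. B (A x) = A (B x)"
  shows "B (Tl x) = Tl (B x)"
  by (simp add: Tl_def shift_op_def bcl_diff[OF B] bcl_scaleC[OF B] BA)

lemma Pr_Tl: "Pr (Tl x) = Tl (Pr x)" by (rule comm_Tl[OF Pr_bcl Pr_A])
lemma Sr_Tl: "Sr (Tl x) = Tl (Sr x)" by (rule comm_Tl[OF Sr_bcl Sr_A])

lemma Tl_shift: "Tl u = shift_op A z u + (z - l) *\<^sub>C u"
  by (simp add: Tl_def shift_op_def scaleC_diff_left)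

lemma R_Tl:
  assumes z: "z \<notin> op_spectrum A"
  shows "resolv A z (Tl u) = u + (z - l) *\<^sub>C resolv A z u"
  by (simp add: Tl_shift[of u z] bcl_add[OF resolv(1)[OF z]] bcl_scaleC[OF resolv(1)[OF z]] resolv(2)[OF z])

lemma Tl_R:
  assumes z: "z \<notin> op_spectrum A"
  shows "Tl (resolv A z u) = u + (z - l) *\<^sub>C resolv A z u"
  by (simp add: Tl_shift[of _ z] resolv(3)[OF z])

lemma ST: "Sr (Tl x) = x - Pr x"
proof (rule cinner_ext_right)
  fix y
  have holc: "(\<lambda>z. cinner y x) holomorphic_on ball l \<delta>" by simp
  have h1: "(\<lambda>z. cinner y x / (z - l)) holomorphic_on (ball l \<delta> - {l})" by (intro holomorphic_intros) auto
  have "cinner y (Sr (Tl x)) = residue (\<lambda>z. 1 / (z - l) * gf (Tl x) y z) l" by (rule Sr_weak)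
  also have "\<dots> = residue (\<lambda>z. cinner y x / (z - l) + gf x y z) l"
  proof (rule res_eq)
    fix z assume z: "z \<in> ball l \<delta> - {l}"
    have "gf (Tl x) y z = cinner y x + (z - l) * gf x y z"
      by (simp add: gf_def R_Tl[OF inD[OF z]] cinner_simps)
    then show "1 / (z - l) * gf (Tl x) y z = cinner y x / (z - l) + gf x y z"
      using z by (simp add: field_simps)
  qed
  also have "\<dots> = residue (\<lambda>z. cinner y x / (z - l)) l + residue (gf x y) l"
    using residue_add[OF open_ball l_in h1 gf_holo] by simp
  also have "residue (\<lambda>z. cinner y x / (z - l)) l = cinner y x"
    using residue_simple[OF open_ball l_in holc] by simp
  also have "residue (gf x y) l = - cinner y (Pr x)" by (simp add: Pr_weak)
  finally show "cinner y (Sr (Tl x)) = cinner y (x - Pr x)" by (simp add: cinner_simps)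
qed

lemma TS: "Tl (Sr x) = x - Pr x"
  using ST Sr_Tl by simp

lemma cinner_Tl_right: "cinner y (Tl v) = cinner (shift_op Astar (cnj l) y) v"
  by (simp add: Tl_def shift_op_def cinner_simps cinner_A_right)

lemma TmP_weak: "cinner y ((Tl ^^ m) (Pr x)) = - residue (\<lambda>z. (z - l) ^ m * gf x y z) l"
proof (induction m arbitrary: y)
  case 0 then show ?case by (simp add: Pr_weak)
next
  case (Suc m)
  define y' where "y' = shift_op Astar (cnj l) y"
  have holp: "(\<lambda>z. (z - l) ^ m * cinner y x) holomorphic_on ball l \<delta>" by (intro holomorphic_intros)
  have h1: "(\<lambda>z. (z - l) ^ m * cinner y x) holomorphic_on (ball l \<delta> - {l})"
    by (rule holomorphic_on_subset[OF holp]) auto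
  have h2: "(\<lambda>z. (z - l) ^ Suc m * gf x y z) holomorphic_on (ball l \<delta> - {l})"
    by (intro holomorphic_intros gf_holo)
  have "cinner y ((Tl ^^ Suc m) (Pr x)) = cinner y' ((Tl ^^ m) (Pr x))"
    by (simp add: y'_def cinner_Tl_right)
  also have "\<dots> = - residue (\<lambda>z. (z - l) ^ m * gf x y' z) l" by (rule Suc)
  also have "residue (\<lambda>z. (z - l) ^ m * gf x y' z) l
      = residue (\<lambda>z. (z - l) ^ m * cinner y x + (z - l) ^ Suc m * gf x y z) l"
  proof (rule res_eq)
    fix z assume z: "z \<in> ball l \<delta> - {l}"
    have "gf x y' z = cinner y (Tl (resolv A z x))" by (simp add: gf_def y'_def cinner_Tl_right)
    also have "\<dots> = cinner y x + (z - l) * gf x y z"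
      by (simp add: Tl_R[OF inD[OF z]] cinner_simps gf_def)
    finally have e: "gf x y' z = cinner y x + (z - l) * gf x y z" .
    show "(z - l) ^ m * gf x y' z = (z - l) ^ m * cinner y x + (z - l) ^ Suc m * gf x y z"
      by (subst e) (simp add: algebra_simps)
  qed
  also have "\<dots> = residue (\<lambda>z. (z - l) ^ m * cinner y x) l + residue (\<lambda>z. (z - l) ^ Suc m * gf x y z) l"
    by (rule residue_add[OF open_ball l_in h1 h2])
  also have "residue (\<lambda>z. (z - l) ^ m * cinner y x) l = 0"
    by (rule residue_holo[OF open_ball l_in holp])
  finally show ?case by simp
qed

lemma TmP_bound:
  assumes r: "0 < r" "r < \<delta>"
  shows "\<exists>K>0. \<forall>m. norm ((Tl ^^ m) (Pr x)) \<le> K * r ^ m"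
proof -
  obtain C where C: "C > 0" "\<And>z u. cmod (z - l) = r \<Longrightarrow> norm (resolv A z u) \<le> C * norm u"
    using circle_bound[OF r] by blast
  have "norm ((Tl ^^ m) (Pr x)) \<le> (C * r * norm x + 1) * r ^ m" for m
  proof -
    define v where "v = (Tl ^^ m) (Pr x)"
    have holo: "(\<lambda>z. (z - l) ^ m * gf x v z) holomorphic_on (ball l \<delta> - {l})"
      by (intro holomorphic_intros gf_holo)
    have "cmod (residue (\<lambda>z. (z - l) ^ m * gf x v z) l) \<le> (r ^ m * (C * norm x * norm v)) * r"
    proof (rule res_bound[OF holo r])
      show "0 \<le> r ^ m * (C * norm x * norm v)" using r C by simp
      fix z assume z: "cmod (z - l) = r"
      have "cmod (gf x v z) \<le> norm v * norm (resolv A z x)" unfolding gf_def by (rule cauchy_schwarz)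
      also have "\<dots> \<le> norm v * (C * norm x)" using C(2)[OF z] by (simp add: mult_left_mono)
      finally have "cmod (gf x v z) \<le> C * norm x * norm v" by (simp add: mult_ac)
      then show "cmod ((z - l) ^ m * gf x v z) \<le> r ^ m * (C * norm x * norm v)"
        using mult_left_mono[OF _ zero_le_power[OF less_imp_le[OF r(1)], of m]] by (simp add: norm_mult norm_power z)
    qed
    moreover have "cinner v v = - residue (\<lambda>z. (z - l) ^ m * gf x v z) l"
      unfolding v_def by (rule TmP_weak)
    then have "residue (\<lambda>z. (z - l) ^ m * gf x v z) l = - complex_of_real ((norm v)\<^sup>2)"
      by (simp add: cinner_self_norm)
    then have "cmod (residue (\<lambda>z. (z - l) ^ m * gf x v z) l) = (norm v)\<^sup>2"
      by (simp only: norm_minus_cancel norm_of_real) simp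
    ultimately have "(norm v)\<^sup>2 \<le> (C * r * norm x * r ^ m) * norm v"
      by (simp add: mult_ac)
    then have "norm v \<le> C * r * norm x * r ^ m"
      by (cases "norm v = 0") (use C r in \<open>auto simp: power2_eq_square mult_le_cancel_right\<close>)
    also have "\<dots> \<le> (C * r * norm x + 1) * r ^ m" using r by (simp add: distrib_right)
    finally show ?thesis by (simp add: v_def)
  qed
  moreover have "C * r * norm x + 1 > 0"
  proof -
    have "0 \<le> C * r * norm x" using C(1) r(1) by simp
    then show ?thesis by linarith
  qed
  ultimately show ?thesis by blast
qed

lemma Pr_H0: "Pr x \<in> quasinilpotent_part Tl"
  by (rule H0_radius[OF \<delta> TmP_bound])

end

context isol
begin

lemma vd_circle_cont: "continuous_on {0..1} (\<lambda>t. vector_derivative (circlepath c r) (at t))"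
  by (simp add: vector_derivative_circlepath) (intro continuous_intros)

lemma PP: "Pr (Pr x) = Pr x"
proof (rule cinner_ext_right)
  fix y
  define g where "g = gf x y"
  define h where "h = gf (Pr x) y"
  define r1 where "r1 = \<delta> / 4"
  define r2 where "r2 = \<delta> / 2"
  have r1: "0 < r1" "r1 < \<delta>" and r2: "0 < r2" "r2 < \<delta>" and r12: "r1 < r2"
    using \<delta> by (auto simp: r1_def r2_def)
  have holg: "g holomorphic_on (ball l \<delta> - {l})" unfolding g_def by (rule gf_holo)
  have holh: "h holomorphic_on (ball l \<delta> - {l})" unfolding h_def by (rule gf_holo)
  have cb1: "cball l r1 \<subseteq> ball l \<delta>" using r1 by (auto simp: dist_norm)
  have cb2: "cball l r2 \<subseteq> ball l \<delta>" using r2 by (auto simp: dist_norm)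
  have Ig: "(g has_contour_integral 2 * pi * \<i> * residue g l) (circlepath l r1)"
    by (rule base_residue[OF open_ball l_in r1(1) holg cb1])
  have Ih: "(h has_contour_integral 2 * pi * \<i> * residue h l) (circlepath l r1)"
    by (rule base_residue[OF open_ball l_in r1(1) holh cb1])
  define F where "F z = contour_integral (circlepath l r2) (\<lambda>w. g w / (w - z))" for z
  have pi1: "path_image (circlepath l r1) = sphere l r1" using r1 by simp
  have pi2: "path_image (circlepath l r2) = sphere l r2" using r2 by simp
  have Fz: "F z = 2 * pi * \<i> * g z - 2 * pi * \<i> * h z" if z: "z \<in> sphere l r1" for z
  proof -
    have zD: "z \<in> ball l \<delta> - {l}" using sphere_sub[OF r1] z by blast
    have zs: "z \<notin> op_spectrum A" by (rule inD[OF zD])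
    have zr2: "norm (z - l) < r2" using z r12 by (simp add: dist_norm norm_minus_commute)
    define k where "k = gf (resolv A z x) y"
    have holk: "k holomorphic_on (ball l \<delta> - {l})" unfolding k_def by (rule gf_holo)
    have Ik: "(k has_contour_integral 2 * pi * \<i> * residue k l) (circlepath l r2)"
      by (rule base_residue[OF open_ball l_in r2(1) holk cb2])
    have hz: "h z = - residue k l"
    proof -
      have "h z = cinner y (resolv A z (Pr x))" by (simp add: h_def gf_def)
      also have "resolv A z (Pr x) = Pr (resolv A z x)"
        by (rule resolv_comm[OF A zs Pr_bcl Pr_A, symmetric])
      also have "cinner y (Pr (resolv A z x)) = - residue k l" by (simp add: Pr_weak k_def)
      finally show ?thesis .
    qed
    have I1: "((\<lambda>w. 1 / (w - z)) has_contour_integral 2 * pi * \<i>) (circlepath l r2)"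
      using Cauchy_integral_circlepath[of l r2 "\<lambda>_. 1" z] zr2 by simp
    have keq: "k w + g z * (1 / (w - z)) = g w / (w - z)" if w: "w \<in> path_image (circlepath l r2)" for w
    proof -
      have wD: "w \<in> ball l \<delta> - {l}" using sphere_sub[OF r2] w pi2 by blast
      have ws: "w \<notin> op_spectrum A" by (rule inD[OF wD])
      have wz: "w - z \<noteq> 0" using w z r12 pi2 by (auto simp: dist_norm)
      have "resolv A w x - resolv A z x = (w - z) *\<^sub>C resolv A w (resolv A z x)"
        by (rule resolvent_identity[OF A zs ws])
      then have "g w - g z = (w - z) * k w"
        by (simp add: g_def k_def gf_def cinner_simps[symmetric])
      then show ?thesis using wz by (simp add: field_simps)
    qed
    have "((\<lambda>w. k w + g z * (1 / (w - z))) has_contour_integral (2 * pi * \<i> * residue k l + g z * (2 * pi * \<i>))) (circlepath l r2)"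
      by (intro has_contour_integral_add Ik has_contour_integral_lmul I1)
    then have "((\<lambda>w. g w / (w - z)) has_contour_integral (2 * pi * \<i> * residue k l + g z * (2 * pi * \<i>))) (circlepath l r2)"
      by (rule has_contour_integral_eq) (rule keq)
    then have "F z = 2 * pi * \<i> * residue k l + g z * (2 * pi * \<i>)"
      unfolding F_def by (rule contour_integral_unique)
    then show ?thesis using hz by (simp add: algebra_simps)
  qed
  have IF: "(F has_contour_integral (2 * pi * \<i> * (2 * pi * \<i> * residue g l) - 2 * pi * \<i> * (2 * pi * \<i> * residue h l))) (circlepath l r1)"
  proof (rule has_contour_integral_eq)
    show "((\<lambda>z. 2 * pi * \<i> * g z - 2 * pi * \<i> * h z) has_contour_integral
      (2 * pi * \<i> * (2 * pi * \<i> * residue g l) - 2 * pi * \<i> * (2 * pi * \<i> * residue h l))) (circlepath l r1)"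
      by (intro has_contour_integral_diff has_contour_integral_lmul Ig Ih)
    show "2 * pi * \<i> * g z - 2 * pi * \<i> * h z = F z" if "z \<in> path_image (circlepath l r1)" for z
    proof -
      have "z \<in> sphere l r1" using that pi1 by blast
      then show ?thesis by (simp add: Fz)
    qed
  qed
  have gc: "continuous_on (sphere l r2) g"
    by (rule continuous_on_subset[OF holomorphic_on_imp_continuous_on[OF holg] sphere_sub[OF r2]])
  have IF0: "contour_integral (circlepath l r1) F = 0"
  proof -
    have "contour_integral (circlepath l r1) F
        = contour_integral (circlepath l r1) (\<lambda>z. contour_integral (circlepath l r2) ((\<lambda>z w. g w / (w - z)) z))"
      unfolding F_def by (rule refl)
    also have "\<dots> = contour_integral (circlepath l r2) (\<lambda>w. contour_integral (circlepath l r1) (\<lambda>z. (\<lambda>z w. g w / (w - z)) z w))"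
    proof (rule contour_integral_swap)
      have c1: "continuous_on (sphere l r1 \<times> sphere l r2) (\<lambda>p. g (snd p))"
        by (rule continuous_on_compose2[OF gc continuous_on_snd]) auto
      have c2: "continuous_on (sphere l r1 \<times> sphere l r2) (\<lambda>p. snd p - fst p)"
        by (intro continuous_intros)
      have nz: "snd p - fst p \<noteq> 0" if "p \<in> sphere l r1 \<times> sphere l r2" for p
        using that r12 by (auto simp: dist_norm)
      have "continuous_on (sphere l r1 \<times> sphere l r2) (\<lambda>p. g (snd p) / (snd p - fst p))"
        by (rule continuous_on_divide[OF c1 c2]) (use nz in auto)
      then show "continuous_on (path_image (circlepath l r1) \<times> path_image (circlepath l r2)) (\<lambda>(y1, y2). g y2 / (y2 - y1))"
        by (simp add: case_prod_unfold abs_of_pos[OF r1(1)] abs_of_pos[OF r2(1)])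
    qed (auto intro: vd_circle_cont)
    also have "\<dots> = contour_integral (circlepath l r2) (\<lambda>w. 0)"
    proof (rule contour_integral_eq)
      fix w assume w: "w \<in> path_image (circlepath l r2)"
      have "((\<lambda>z. g w / (w - z)) has_contour_integral 0) (circlepath l r1)"
      proof (rule Cauchy_theorem_disc_simple[of _ l r2])
        show "(\<lambda>z. g w / (w - z)) holomorphic_on ball l r2"
          using w pi2 by (intro holomorphic_intros) (auto simp: dist_norm)
        show "path_image (circlepath l r1) \<subseteq> ball l r2" using pi1 r12 by auto
      qed auto
      then show "contour_integral (circlepath l r1) (\<lambda>z. (\<lambda>z w. g w / (w - z)) z w) = 0"
        by (simp add: contour_integral_unique)
    qed
    finally show ?thesis by simp
  qed
  have "2 * pi * \<i> * (2 * pi * \<i> * residue g l) - 2 * pi * \<i> * (2 * pi * \<i> * residue h l) = 0"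
    using contour_integral_unique[OF IF] IF0 by simp
  then have "(2 * pi * \<i>) * (2 * pi * \<i>) * (residue g l - residue h l) = 0"
    by (simp add: algebra_simps)
  then have "residue g l = residue h l" by simp
  then show "cinner y (Pr (Pr x)) = cinner y (Pr x)"
    by (simp add: Pr_weak g_def h_def)
qed

lemma H0_Pr:
  assumes x: "x \<in> quasinilpotent_part Tl"
  shows "Pr x = x"
proof -
  define v where "v = x - Pr x"
  have vH: "v \<in> quasinilpotent_part Tl" unfolding v_def by (rule H0_diff[OF Tl_bcl x Pr_H0])
  have Pv: "Pr v = 0" by (simp add: v_def bcl_diff[OF Pr_bcl] PP)
  have PTq: "Pr ((Tl ^^ q) w) = (Tl ^^ q) (Pr w)" for q w
    by (rule funpow_comm[of Tl Pr, symmetric]) (simp add: Pr_Tl)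
  have STq: "(Sr ^^ q) ((Tl ^^ q) w) = w" if "Pr w = 0" for q w
    using that
  proof (induction q arbitrary: w)
    case 0 then show ?case by simp
  next
    case (Suc q)
    have "Pr ((Tl ^^ q) w) = 0" using Suc.prems by (simp add: PTq bcl_zero[OF bcl_funpow[OF Tl_bcl]])
    then have "Sr ((Tl ^^ Suc q) w) = (Tl ^^ q) w" by (simp add: ST)
    then have "(Sr ^^ Suc q) ((Tl ^^ Suc q) w) = (Sr ^^ q) ((Tl ^^ q) w)" by (simp add: funpow_swap1)
    then show ?case using Suc by simp
  qed
  obtain K where K: "K > 0" "\<And>m u. norm ((Sr ^^ m) u) \<le> K ^ m * norm u"
    using bcl_funpow_bound[OF Sr_bcl] by blast
  have "v = 0"
  proof (rule H0_zero[OF K(1) _ vH])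
    fix m
    have "norm v = norm ((Sr ^^ m) ((Tl ^^ m) v))" using STq[OF Pv, of m] by simp
    also have "\<dots> \<le> K ^ m * norm ((Tl ^^ m) v)" by (rule K(2))
    finally show "norm v \<le> K ^ m * norm ((Tl ^^ m) v)" .
  qed
  then show ?thesis by (simp add: v_def)
qed

lemma isolated_pole:
  assumes ls: "l \<in> op_spectrum A" and H: "quasinilpotent_part Tl = op_kernel (Tl ^^ p)"
  shows "\<exists>q>0. is_ascent (shift_op A l) q \<and> is_descent (shift_op A l) q"
proof -
  have Mker: "Pr x = x \<longleftrightarrow> (Tl ^^ p) x = 0" for x
  proof
    assume "Pr x = x"
    then have "x \<in> quasinilpotent_part Tl" using Pr_H0[of x] by simp
    then show "(Tl ^^ p) x = 0" using H by (simp add: op_kernel_def)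
  next
    assume "(Tl ^^ p) x = 0"
    then have "x \<in> quasinilpotent_part Tl" using H by (simp add: op_kernel_def)
    then show "Pr x = x" by (rule H0_Pr)
  qed
  obtain q where q: "is_ascent Tl q" "is_descent Tl q" "q = 0 \<longrightarrow> (\<forall>x. Pr x = 0)"
    using ascent_descent_decomp[OF Tl_bcl Pr_bcl Sr_bcl PP Pr_Tl ST TS Mker] by blast
  have "q > 0"
  proof (rule ccontr)
    assume "\<not> q > 0"
    then have P0: "Pr x = 0" for x using q(3) by simp
    have "Sr \<circ> shift_op A l = id" "shift_op A l \<circ> Sr = id"
      using ST TS P0 by (auto simp: fun_eq_iff Tl_def)
    then have "l \<notin> op_spectrum A" using Sr_bcl by (auto simp: op_spectrum_def)
    then show False using ls by simp
  qed
  then show ?thesis using q by (auto simp: Tl_def)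
qed

end

theorem theorem3p3:
  fixes A Astar :: "'a::{complex_inner, complete_space} \<Rightarrow> 'a" and n :: nat
  assumes "infinite_dimensional TYPE('a)"
    and "bounded_clinear A"
    and "\<forall>x y. cinner (A x) y = cinner x (Astar y)"
    and "n > 1"
    and "Astar \<circ> (A ^^ n) = (A ^^ n) \<circ> Astar"
  shows "(\<forall>l. l \<noteq> 0 \<and> l \<in> op_spectrum A \<longrightarrow>
            quasinilpotent_part (shift_op A l) = op_kernel (shift_op A l))
       \<and> quasinilpotent_part A = op_kernel (A ^^ n)
       \<and> polaroid A"
proof -
  note A = assms(2) and adj = assms(3) and n = assms(4) and comm = assms(5)
  have p1: "\<forall>l. l \<noteq> 0 \<and> l \<in> op_spectrum A \<longrightarrow>
            quasinilpotent_part (shift_op A l) = op_kernel (shift_op A l)"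
    using part1[OF A adj n comm] by blast
  have p2: "quasinilpotent_part A = op_kernel (A ^^ n)" by (rule part2[OF A adj n comm])
  have pol: "polaroid A" unfolding polaroid_def
  proof (intro allI impI)
    fix l assume l: "l \<in> op_spectrum A \<and> \<not> l islimpt op_spectrum A"
    then obtain \<delta> where \<delta>: "\<delta> > 0" "\<And>x'. x' \<in> op_spectrum A \<Longrightarrow> x' \<noteq> l \<Longrightarrow> \<not> dist x' l < \<delta>"
      unfolding islimpt_approachable by blast
    have iso: "z \<notin> op_spectrum A" if "z \<in> ball l \<delta>" "z \<noteq> l" for z
      using \<delta>(2)[of z] that by (auto simp: dist_commute)
    have adj': "\<And>x y. cinner (A x) y = cinner x (Astar y)" using adj by blast
    interpret I: isol A Astar l \<delta>
      by unfold_locales (use A adj' \<delta>(1) iso in auto)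
    define p where "p = (if l = 0 then n else 1)"
    have H: "quasinilpotent_part I.Tl = op_kernel (I.Tl ^^ p)"
    proof (cases "l = 0")
      case True
      have "I.Tl = A" unfolding I.Tl_def using True by (simp add: shift_op_def fun_eq_iff)
      then show ?thesis using p2 True by (simp add: p_def)
    next
      case False
      then have "quasinilpotent_part (shift_op A l) = op_kernel (shift_op A l)"
        using p1 l by blast
      then show ?thesis using False by (simp add: p_def I.Tl_def)
    qed
    obtain q where "q > 0" "is_ascent (shift_op A l) q" "is_descent (shift_op A l) q"
      using I.isolated_pole[OF conjunct1[OF l] H] by blast
    then show "Defs.is_pole A l" unfolding Defs.is_pole_def using l by blast
  qed
  show ?thesis using p1 p2 pol by blast
qed

end
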